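(* For $x\in X$ and $z\in\mathbb{T}$ define $\psi_{x,z}\big(\sum_k f_k\delta^k\big)=\sum_k f_k(x)z^k$ for $\sum_k f_k\delta^k\in C(X)'_1$. Then $\psi:(x,z)\mapsto\psi_{x,z}$ is a continuous surjection $X\times\mathbb{T}\to\Delta(C(X)'_1)$, and $\Delta(C(X)'_1)$ is the topological quotient of $X\times\mathbb{T}$ via $\psi$. The fibers are: (i) for $x\notin\bigcup_{q\ge1}\mathrm{Fix}_q(\sigma)^\circ$: $\psi^{-1}(\{\omega_x\})=\{x\}\times\mathbb{T}$; (ii) for $x\in\bigcup_{q\ge1}\mathrm{Fix}_q(\sigma)^\circ$ and $c\in\mathbb{T}$: $\psi^{-1}(\{\omega_{x,c}\})=\{(x,z):z\in\mathbb{T},\ z^n=c\}$, where $n$ is the minimal $n\ge1$ such that $x\in\mathrm{Fix}_n(\sigma)^\circ$.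
   Context: Let $X$ be a non-empty compact Hausdorff space and $\sigma:X\to X$ a homeomorphism. For $n\in\mathbb{Z}$ let $\mathrm{Fix}_n(\sigma)=\{x:\sigma^nx=x\}$; a superscript $\circ$ denotes interior, $\mathrm{supp}(f)$ the closure of $\{f\ne0\}$. $C(X)$ is the algebra of continuous complex functions with sup norm, $\alpha(f)=f\circ\sigma^{-1}$. $\ell^1(\Sigma)$ is the set of $\ell:\mathbb{Z}\to C(X)$ with $\|\ell\|=\sum_k\|\ell(k)\|_\infty<\infty$, product $(\ell\ell')(n)=\sum_k\ell(k)\alpha^k(\ell'(n-k))$, involution $\ell^*(n)=\overline{\alpha^n(\ell(-n))}$. With $\delta$ the element equal to the constant $1$ at $1\in\mathbb{Z}$ and $0$ elsewhere, each element is uniquely $\sum_k f_k\delta^k$, $f_k=\ell(k)$. $C(X)'_1$, the commutant of $C(X)$ (embedded as $\{f\delta^0\}$) in $\ell^1(\Sigma)$, equals $\{\sum_kf_k\delta^k:\mathrm{supp}(f_k)\subset\mathrm{Fix}_k(\sigma)\ \forall k\}$ and is commutative; $\Delta(C(X)'_1)$ is its maximal ideal space with the Gelfand topology. For $x\notin\bigcup_{q\ge1}\mathrm{Fix}_q(\sigma)^\circ$, $\omega_x$ is the character $\sum_kf_k\delta^k\mapsto f_0(x)$; for $x\in\bigcup_{q\ge1}\mathrm{Fix}_q(\sigma)^\circ$ and $c\in\mathbb{T}$, $\omega_{x,c}$ is the character $\sum_kf_k\delta^k\mapsto\sum_jf_{jn}(x)c^j$, with $n$ the minimal $n\ge1$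 such that $x\in\mathrm{Fix}_n(\sigma)^\circ$. These are exactly all characters of $C(X)'_1$, without repetition. *)

theory Defs
  imports "HOL-Analysis.Analysis"
begin

definition ipow :: "('a \<Rightarrow> 'a) \<Rightarrow> int \<Rightarrow> 'a \<Rightarrow> 'a" where
  "ipow \<sigma> n = (if 0 \<le> n then \<sigma> ^^ nat n else inv \<sigma> ^^ nat (- n))"

definition Fix :: "('a \<Rightarrow> 'a) \<Rightarrow> int \<Rightarrow> 'a set" where
  "Fix \<sigma> n = {x. ipow \<sigma> n x = x}"

definition supn :: "('a \<Rightarrow> complex) \<Rightarrow> real" where
  "supn f = (SUP x. cmod (f x))"

definition l1 :: "(int \<Rightarrow> 'a::topological_space \<Rightarrow> complex) set" where
  "l1 = {F. (\<forall>k. continuous_on UNIV (F k)) \<and> (\<lambda>k. supn (F k)) summable_on UNIV}"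

text \<open>Twisted convolution product: (l l')(n) = sum_k l(k) alpha^k(l'(n-k)),
  with alpha(f) = f o sigma^{-1}, so alpha^k(f) = f o sigma^{-k}.\<close>
definition l1mult :: "('a \<Rightarrow> 'a) \<Rightarrow> (int \<Rightarrow> 'a \<Rightarrow> complex) \<Rightarrow> (int \<Rightarrow> 'a \<Rightarrow> complex)
    \<Rightarrow> (int \<Rightarrow> 'a \<Rightarrow> complex)" where
  "l1mult \<sigma> F G = (\<lambda>n x. \<Sum>\<^sub>\<infinity>k. F k x * G (n - k) (ipow \<sigma> (- k) x))"

definition emb :: "('a \<Rightarrow> complex) \<Rightarrow> (int \<Rightarrow> 'a \<Rightarrow> complex)" where
  "emb f = (\<lambda>k. if k = 0 then f else (\<lambda>_. 0))"

definition Comm :: "('a::topological_space \<Rightarrow> 'a) \<Rightarrow> (int \<Rightarrow> 'a \<Rightarrow> complex) set" where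
  "Comm \<sigma> = {F \<in> l1. \<forall>f. continuous_on UNIV f \<longrightarrow> l1mult \<sigma> (emb f) F = l1mult \<sigma> F (emb f)}"

definition characters :: "('a::topological_space \<Rightarrow> 'a) \<Rightarrow> ((int \<Rightarrow> 'a \<Rightarrow> complex) \<Rightarrow> complex) set" where
  "characters \<sigma> = {\<phi> \<in> extensional (Comm \<sigma>).
     (\<exists>F \<in> Comm \<sigma>. \<phi> F \<noteq> 0) \<and>
     (\<forall>F \<in> Comm \<sigma>. \<forall>G \<in> Comm \<sigma>. \<phi> (\<lambda>k x. F k x + G k x) = \<phi> F + \<phi> G \<and>
                              \<phi> (l1mult \<sigma> F G) = \<phi> F * \<phi> G) \<and>
     (\<forall>F \<in> Comm \<sigma>. \<forall>c. \<phi> (\<lambda>k x. c * F k x) = c * \<phi> F)}"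

text \<open>Gelfand topology = weak-* topology = topology of pointwise convergence on C(X)'_1.\<close>
definition gelfand_top :: "('a::topological_space \<Rightarrow> 'a) \<Rightarrow> ((int \<Rightarrow> 'a \<Rightarrow> complex) \<Rightarrow> complex) topology" where
  "gelfand_top \<sigma> = subtopology (product_topology (\<lambda>_. euclidean) (Comm \<sigma>)) (characters \<sigma>)"

definition XT :: "('a::topological_space \<times> complex) topology" where
  "XT = prod_topology euclidean (top_of_set (sphere 0 1))"

definition psi :: "('a::topological_space \<Rightarrow> 'a) \<Rightarrow> 'a \<times> complex \<Rightarrow> ((int \<Rightarrow> 'a \<Rightarrow> complex) \<Rightarrow> complex)" where
  "psi \<sigma> = (\<lambda>(x, z). restrict (\<lambda>F. \<Sum>\<^sub>\<infinity>k. F k x * z powi k) (Comm \<sigma>))"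

definition Per :: "('a::topological_space \<Rightarrow> 'a) \<Rightarrow> 'a set" where
  "Per \<sigma> = (\<Union>q\<in>{1::nat..}. interior (Fix \<sigma> (int q)))"

definition nmin :: "('a::topological_space \<Rightarrow> 'a) \<Rightarrow> 'a \<Rightarrow> nat" where
  "nmin \<sigma> x = (LEAST n::nat. 1 \<le> n \<and> x \<in> interior (Fix \<sigma> (int n)))"

definition omega1 :: "('a::topological_space \<Rightarrow> 'a) \<Rightarrow> 'a \<Rightarrow> ((int \<Rightarrow> 'a \<Rightarrow> complex) \<Rightarrow> complex)" where
  "omega1 \<sigma> x = restrict (\<lambda>F. F 0 x) (Comm \<sigma>)"

definition omega2 :: "('a::topological_space \<Rightarrow> 'a) \<Rightarrow> 'a \<Rightarrow> complex \<Rightarrow> ((int \<Rightarrow> 'a \<Rightarrow> complex) \<Rightarrow> complex)" where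
  "omega2 \<sigma> x c = restrict (\<lambda>F. \<Sum>\<^sub>\<infinity>j. F (j * int (nmin \<sigma> x)) x * c powi j) (Comm \<sigma>)"

end

theory Submission
  imports Defs
begin

lemma ipow_0[simp]: "ipow \<sigma> 0 = id"
  by (simp add: ipow_def)

locale Setup =
  fixes \<sigma> :: "'a::t2_space \<Rightarrow> 'a"
  assumes cpt: "compact (UNIV :: 'a set)" and bij: "bij \<sigma>"
begin

lemma inv_l[simp]: "inv \<sigma> (\<sigma> y) = y" using bij by (simp add: bij_is_inj)
lemma inv_r[simp]: "\<sigma> (inv \<sigma> y) = y" using bij by (simp add: bij_is_surj surj_f_inv_f)

lemma ipow_succ: "ipow \<sigma> (a+1) = \<sigma> \<circ> ipow \<sigma> a"
proof (cases "0 \<le> a")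
  case True
  then have "nat (a+1) = Suc (nat a)" by simp
  then show ?thesis using True by (simp add: ipow_def)
next
  case False
  show ?thesis
  proof (cases "a = -1")
    case True then show ?thesis by (auto simp: ipow_def fun_eq_iff)
  next
    case F2: False
    then have "nat (-a) = Suc (nat (-(a+1)))" using False by simp
    then show ?thesis using False F2 by (auto simp: ipow_def fun_eq_iff)
  qed
qed

lemma ipow_succ': "ipow \<sigma> (a+1) = ipow \<sigma> a \<circ> \<sigma>"
proof (cases "0 \<le> a")
  case True
  then have "nat (a+1) = Suc (nat a)" by simp
  then show ?thesis using True by (simp add: ipow_def funpow_Suc_right del: funpow.simps)
next
  case False
  show ?thesis
  proof (cases "a = -1")
    case True then show ?thesis by (auto simp: ipow_def fun_eq_iff)
  next
    case F2: False
    then have "nat (-a) = Suc (nat (-(a+1)))" using False by simp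
    then show ?thesis using False F2 
      by (auto simp: ipow_def fun_eq_iff funpow_Suc_right simp del: funpow.simps)
  qed
qed

lemma ipow_pred: "ipow \<sigma> (a - 1) = ipow \<sigma> a \<circ> inv \<sigma>"
proof -
  have "ipow \<sigma> a = ipow \<sigma> (a - 1) \<circ> \<sigma>" using ipow_succ'[of "a-1"] by simp
  then show ?thesis by (auto simp: fun_eq_iff)
qed

lemma ipow_add: "ipow \<sigma> (a+b) = ipow \<sigma> a \<circ> ipow \<sigma> b"
proof (induction b rule: int_induct[where k=0])
  case base then show ?case by simp
next
  case (step1 i)
  have "ipow \<sigma> (a + (i+1)) = ipow \<sigma> ((a+i)+1)" by (simp add: add.assoc)
  also have "\<dots> = ipow \<sigma> a \<circ> ipow \<sigma> (i+1)" using step1 by (simp add: ipow_succ' fun_eq_iff)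
  finally show ?case .
next
  case (step2 i)
  have "ipow \<sigma> (a + (i-1)) = ipow \<sigma> ((a+i)-1)" by (simp add: algebra_simps)
  also have "\<dots> = ipow \<sigma> a \<circ> ipow \<sigma> (i-1)" using step2 by (simp add: ipow_pred fun_eq_iff)
  finally show ?case .
qed

lemma ipow_neg_cancel[simp]: "ipow \<sigma> (-a) (ipow \<sigma> a y) = y"
  using ipow_add[of "-a" a] by (simp add: fun_eq_iff)

lemma ipow_neg_cancel'[simp]: "ipow \<sigma> a (ipow \<sigma> (-a) y) = y"
  using ipow_add[of a "-a"] by (simp add: fun_eq_iff)

lemma ipow_neg_fix: "ipow \<sigma> (-a) y = y \<longleftrightarrow> ipow \<sigma> a y = y"
  by (metis ipow_neg_cancel ipow_neg_cancel')

lemma Fix_neg: "Fix \<sigma> (-a) = Fix \<sigma> a"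
  by (auto simp: Fix_def ipow_neg_fix)

lemma Fix_add: "y \<in> Fix \<sigma> a \<Longrightarrow> y \<in> Fix \<sigma> b \<Longrightarrow> y \<in> Fix \<sigma> (a+b)"
  by (simp add: Fix_def ipow_add)

lemma Fix_mult: "y \<in> Fix \<sigma> a \<Longrightarrow> y \<in> Fix \<sigma> (a*m)"
proof (induction m rule: int_induct[where k=0])
  case base then show ?case by (simp add: Fix_def)
next
  case (step1 i) then show ?case using Fix_add[of y "a*i" a] by (simp add: algebra_simps)
next
  case (step2 i) then show ?case using Fix_add[of y "a*i" "-a"] Fix_neg[of a] by (simp add: algebra_simps)
qed

lemma Fix_gcd: "y \<in> Fix \<sigma> a \<Longrightarrow> y \<in> Fix \<sigma> b \<Longrightarrow> y \<in> Fix \<sigma> (gcd a b)"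
proof -
  assume "y \<in> Fix \<sigma> a" "y \<in> Fix \<sigma> b"
  obtain u v where "gcd a b = a * u + b * v" using bezout_int by (metis mult.commute)
  then show ?thesis using Fix_add Fix_mult \<open>y \<in> Fix \<sigma> a\<close> \<open>y \<in> Fix \<sigma> b\<close> by metis
qed

lemma interior_Fix_gcd: "y \<in> interior (Fix \<sigma> a) \<Longrightarrow> y \<in> interior (Fix \<sigma> b) \<Longrightarrow> y \<in> interior (Fix \<sigma> (gcd a b))"
proof -
  have "interior (Fix \<sigma> a) \<inter> interior (Fix \<sigma> b) \<subseteq> interior (Fix \<sigma> (gcd a b))"
    by (rule interior_maximal) (auto intro: Fix_gcd dest: interior_subset[THEN subsetD])
  then show "y \<in> interior (Fix \<sigma> a) \<Longrightarrow> y \<in> interior (Fix \<sigma> b) \<Longrightarrow> ?thesis" by blast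
qed

lemma Hausdorff_t2: "Hausdorff_space (euclidean :: 'a topology)"
  unfolding Hausdorff_space_def disjnt_def
  by (metis hausdorff open_openin)

lemma normal: "normal_space (euclidean :: 'a topology)"
  by (rule compact_Hausdorff_or_regular_imp_normal_space)
     (use cpt Hausdorff_t2 in \<open>auto simp: compact_space_def\<close>)

lemma urysohn:
  assumes "closed S" "closed T" "S \<inter> T = {}"
  obtains f :: "'a \<Rightarrow> real" where "continuous_on UNIV f" "\<And>y. f y \<in> {0..1}"
    "\<And>y. y \<in> S \<Longrightarrow> f y = 1" "\<And>y. y \<in> T \<Longrightarrow> f y = 0"
proof -
  obtain f where f: "continuous_map euclidean (top_of_set {0..1::real}) f" "f ` T \<subseteq> {0}" "f ` S \<subseteq> {1}"
    using Urysohn_lemma[OF normal, of T S 0 1] assms by (auto simp: disjnt_def)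
  then show ?thesis using that[of f]
    by (fastforce simp: continuous_map_in_subtopology)
qed

lemma separate:
  assumes "y \<noteq> w"
  obtains f :: "'a \<Rightarrow> complex" where "continuous_on UNIV f" "f y = 1" "f w = 0"
proof -
  have "\<exists>f::'a\<Rightarrow>real. continuous_on UNIV f \<and> f y = 1 \<and> f w = 0"
    by (rule urysohn[of "{y}" "{w}"]) (use assms in auto)
  then obtain f :: "'a\<Rightarrow>real" where "continuous_on UNIV f" "f y = 1" "f w = 0" by blast
  moreover have "continuous_on UNIV (\<lambda>v. complex_of_real (f v))"
    by (intro continuous_intros calculation)
  ultimately show ?thesis using that[of "\<lambda>v. complex_of_real (f v)"] by auto
qed

end

lemma sum_bound:
  fixes g :: "'i \<Rightarrow> 'c::banach" and M :: "'i \<Rightarrow> real"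
  assumes "M summable_on A" "\<And>k. k\<in>A \<Longrightarrow> norm (g k) \<le> M k"
  shows "g summable_on A" "norm (infsum g A) \<le> infsum M A"
proof -
  have "(\<lambda>k. norm (g k)) summable_on A"
    by (rule summable_on_comparison_test[OF assms(1)]) (use assms(2) in auto)
  then show gs: "g summable_on A" by (simp add: abs_summable_summable)
  show "norm (infsum g A) \<le> infsum M A"
    by (rule norm_infsum_le[OF has_sum_infsum[OF gs] has_sum_infsum[OF assms(1)]]) (use assms in auto)
qed

lemma tail_bound:
  fixes g :: "'i \<Rightarrow> complex" and M :: "'i \<Rightarrow> real"
  assumes "M summable_on UNIV" "\<And>k. cmod (g k) \<le> M k" "finite A"
  shows "cmod (infsum g UNIV - sum g A) \<le> infsum M UNIV - sum M A"
proof -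
  have gs: "g summable_on UNIV" using sum_bound assms by blast
  have "infsum g UNIV = infsum g A + infsum g (-A)"
    using infsum_Un_disjoint[of g A "-A"] summable_on_subset_banach[OF gs] by (simp add: Compl_partition)
  moreover have "infsum M UNIV = infsum M A + infsum M (-A)"
    using infsum_Un_disjoint[of M A "-A"] summable_on_subset[OF assms(1)] by (simp add: Compl_partition)
  moreover have "cmod (infsum g (-A)) \<le> infsum M (-A)"
    using sum_bound(2)[of M "-A" g] summable_on_subset[OF assms(1)] assms(2) by blast
  ultimately show ?thesis using assms(3) by simp
qed

lemma tail_small:
  fixes M :: "'i \<Rightarrow> real"
  assumes "M summable_on UNIV" "e > 0"
  shows "\<forall>\<^sub>F A in finite_subsets_at_top UNIV. infsum M UNIV - sum M A < e"
proof -
  have "(sum M \<longlongrightarrow> infsum M UNIV) (finite_subsets_at_top UNIV)"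
    using assms(1) has_sum_def has_sum_infsum by blast
  then have "\<forall>\<^sub>F A in finite_subsets_at_top UNIV. dist (sum M A) (infsum M UNIV) < e"
    using assms(2) tendsto_iff by blast
  then show ?thesis by eventually_elim (simp add: dist_real_def)
qed

lemma cont_infsum:
  fixes g :: "'i \<Rightarrow> 'b::topological_space \<Rightarrow> complex" and M :: "'i \<Rightarrow> real"
  assumes "\<And>k. continuous_on S (g k)" "M summable_on UNIV" "\<And>k y. y \<in> S \<Longrightarrow> cmod (g k y) \<le> M k"
  shows "continuous_on S (\<lambda>y. infsum (\<lambda>k. g k y) UNIV)"
proof (rule uniform_limit_theorem)
  show "\<forall>\<^sub>F A in finite_subsets_at_top UNIV. continuous_on S (\<lambda>y. sum (\<lambda>k. g k y) A)"
    by (intro always_eventually allI continuous_on_sum) (use assms(1) in auto)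
  show "\<not> trivial_limit (finite_subsets_at_top (UNIV::'i set))"
    by (simp add: finite_subsets_at_top_neq_bot)
  show "uniform_limit S (\<lambda>A y. sum (\<lambda>k. g k y) A) (\<lambda>y. infsum (\<lambda>k. g k y) UNIV) (finite_subsets_at_top UNIV)"
    unfolding uniform_limit_iff
  proof (intro allI impI)
    fix e :: real assume "e > 0"
    have ev: "\<forall>\<^sub>F A in finite_subsets_at_top UNIV. finite A \<and> infsum M UNIV - sum M A < e"
    proof (rule eventually_conj)
      show "\<forall>\<^sub>F A in finite_subsets_at_top UNIV. finite A"
        by (rule eventually_finite_subsets_at_top_weakI) simp
      show "\<forall>\<^sub>F A in finite_subsets_at_top UNIV. infsum M UNIV - sum M A < e"
        by (rule tail_small[OF assms(2) \<open>e>0\<close>])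
    qed
    have key: "finite A \<and> infsum M UNIV - sum M A < e \<Longrightarrow> (\<forall>y\<in>S. dist (sum (\<lambda>k. g k y) A) (infsum (\<lambda>k. g k y) UNIV) < e)" for A
    proof
      fix y assume A: "finite A \<and> infsum M UNIV - sum M A < e" and "y \<in> S"
      have "cmod (infsum (\<lambda>k. g k y) UNIV - sum (\<lambda>k. g k y) A) \<le> infsum M UNIV - sum M A"
        using assms(3)[OF \<open>y \<in> S\<close>] A by (intro tail_bound[OF assms(2)]) auto
      moreover have "dist (sum (\<lambda>k. g k y) A) (infsum (\<lambda>k. g k y) UNIV) = cmod (infsum (\<lambda>k. g k y) UNIV - sum (\<lambda>k. g k y) A)"
        by (simp only: dist_norm norm_minus_commute[of "sum (\<lambda>k. g k y) A"])
      ultimately show "dist (sum (\<lambda>k. g k y) A) (infsum (\<lambda>k. g k y) UNIV) < e"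
        using A by linarith
    qed
    show "\<forall>\<^sub>F A in finite_subsets_at_top UNIV. \<forall>y\<in>S. dist (sum (\<lambda>k. g k y) A) (infsum (\<lambda>k. g k y) UNIV) < e"
      by (rule eventually_mono[OF ev key])
  qed
qed

context Setup
begin

lemma cont_bounded: "continuous_on UNIV (f::'a\<Rightarrow>complex) \<Longrightarrow> bdd_above (range (\<lambda>x. cmod (f x)))"
proof -
  assume c: "continuous_on UNIV f"
  have "compact (f ` UNIV)" by (rule compact_continuous_image[OF c cpt])
  from compact_imp_bounded[OF this] obtain a where a: "\<forall>y\<in>f ` UNIV. norm y \<le> a"
    unfolding bounded_iff by blast
  show ?thesis by (rule bdd_aboveI2[where M=a]) (use a in auto)
qed

lemma supn_ge: "continuous_on UNIV (f::'a\<Rightarrow>complex) \<Longrightarrow> cmod (f y) \<le> supn f"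
  unfolding supn_def by (rule cSUP_upper[OF UNIV_I cont_bounded])

lemma supn_nonneg: "continuous_on UNIV (f::'a\<Rightarrow>complex) \<Longrightarrow> 0 \<le> supn f"
  by (rule order_trans[OF norm_ge_zero supn_ge])

lemma supn_le: "(\<And>y::'a. cmod (f y) \<le> B) \<Longrightarrow> supn f \<le> B"
  unfolding supn_def by (rule cSUP_least) auto

lemma supn_zero[simp]: "supn (\<lambda>_. 0) = 0"
  by (simp add: supn_def)

end

lemma prod_summable_real:
  fixes a :: "'i \<Rightarrow> real" and b :: "'j \<Rightarrow> real"
  assumes as: "a summable_on UNIV" and bs: "b summable_on UNIV" and a0: "\<And>k. 0 \<le> a k" and b0: "\<And>m. 0 \<le> b m"
  shows "(\<lambda>(k,m). a k * b m) summable_on UNIV \<times> UNIV"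
    and "infsum (\<lambda>(k,m). a k * b m) (UNIV \<times> UNIV) = infsum a UNIV * infsum b UNIV"
proof -
  have S: "(\<lambda>(k,m). a k * b m) summable_on Sigma UNIV (\<lambda>_. UNIV)"
  proof (rule summable_on_SigmaI[where g="\<lambda>k. a k * infsum b UNIV"])
    show "((\<lambda>y. case (k, y) of (k, m) \<Rightarrow> a k * b m) has_sum a k * infsum b UNIV) UNIV" for k
      using has_sum_cmult_right[OF has_sum_infsum[OF bs], of "a k"] by simp
    show "(\<lambda>k. a k * infsum b UNIV) summable_on UNIV"
      by (rule summable_on_cmult_left[OF as])
    show "\<And>x y. 0 \<le> (case (x, y) of (k, m) \<Rightarrow> a k * b m)" using a0 b0 by simp
  qed
  then show "(\<lambda>(k,m). a k * b m) summable_on UNIV \<times> UNIV" by simp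
  have "infsum (\<lambda>(k,m). a k * b m) (UNIV \<times> UNIV) = infsum (\<lambda>k. infsum (\<lambda>m. a k * b m) UNIV) UNIV"
    using infsum_Sigma'_banach[of "\<lambda>k m. a k * b m" UNIV "\<lambda>_. UNIV"] S by simp
  also have "\<dots> = infsum (\<lambda>k. a k * infsum b UNIV) UNIV"
    by (simp add: infsum_cmult_right bs)
  also have "\<dots> = infsum a UNIV * infsum b UNIV"
    by (simp add: infsum_cmult_left as)
  finally show "infsum (\<lambda>(k,m). a k * b m) (UNIV \<times> UNIV) = infsum a UNIV * infsum b UNIV" .
qed

lemma dom_summable:
  fixes h :: "'i \<times> 'j \<Rightarrow> 'c::banach" and a :: "'i \<Rightarrow> real" and b :: "'j \<Rightarrow> real"
  assumes as: "a summable_on UNIV" and bs: "b summable_on UNIV" and a0: "\<And>k. 0 \<le> a k" and b0: "\<And>m. 0 \<le> b m"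
    and hb: "\<And>k m. norm (h (k,m)) \<le> a k * b m"
  shows "h summable_on UNIV \<times> UNIV"
  using sum_bound(1)[OF prod_summable_real(1)[OF as bs a0 b0], of h] hb by auto

lemma bij_conv: "bij_betw (\<lambda>(n::int,k::int). (k, n - k)) (UNIV \<times> UNIV) (UNIV \<times> UNIV)"
  by (rule bij_betwI[where g="\<lambda>(k,m). (k+m, k)"]) auto

lemma cauchy_int:
  fixes u v :: "int \<Rightarrow> 'c::{banach,real_normed_field}" and a b :: "int \<Rightarrow> real"
  assumes as: "a summable_on UNIV" and bs: "b summable_on UNIV" and a0: "\<And>k. 0 \<le> a k" and b0: "\<And>m. 0 \<le> b m"
    and ua: "\<And>k. norm (u k) \<le> a k" and vb: "\<And>m. norm (v m) \<le> b m"
  shows "(\<lambda>n. infsum (\<lambda>k. u k * v (n-k)) UNIV) summable_on UNIV"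
    and "infsum (\<lambda>n. infsum (\<lambda>k. u k * v (n-k)) UNIV) UNIV = infsum u UNIV * infsum v UNIV"
proof -
  define h where "h = (\<lambda>(k,m). u k * v m)"
  have us: "u summable_on UNIV" using sum_bound(1)[OF as] ua by blast
  have vs: "v summable_on UNIV" using sum_bound(1)[OF bs] vb by blast
  have hs: "h summable_on UNIV \<times> UNIV"
    by (rule dom_summable[OF as bs a0 b0]) (auto simp: h_def norm_mult intro: mult_mono ua vb a0 b0 order_trans[OF norm_ge_zero ua])
  have Hs: "(\<lambda>(n,k). u k * v (n - k)) summable_on UNIV \<times> UNIV"
    using summable_on_reindex_bij_betw[OF bij_conv, of h] hs by (simp add: h_def case_prod_unfold)
  then show "(\<lambda>n. infsum (\<lambda>k. u k * v (n-k)) UNIV) summable_on UNIV"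
    using summable_on_Sigma_banach[of "\<lambda>n k. u k * v (n - k)" UNIV "\<lambda>_. UNIV"] by simp
  have "infsum (\<lambda>n. infsum (\<lambda>k. u k * v (n-k)) UNIV) UNIV = infsum (\<lambda>(n,k). u k * v (n - k)) (UNIV \<times> UNIV)"
    using infsum_Sigma'_banach[of "\<lambda>n k. u k * v (n - k)" UNIV "\<lambda>_. UNIV"] Hs by simp
  also have "\<dots> = infsum h (UNIV \<times> UNIV)"
    using infsum_reindex_bij_betw[OF bij_conv, of h] by (simp add: h_def case_prod_unfold)
  also have "\<dots> = infsum (\<lambda>k. infsum (\<lambda>m. u k * v m) UNIV) UNIV"
    using infsum_Sigma'_banach[of "\<lambda>k m. u k * v m" UNIV "\<lambda>_. UNIV"] hs by (simp add: h_def)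
  also have "\<dots> = infsum (\<lambda>k. u k * infsum v UNIV) UNIV"
    by (simp add: infsum_cmult_right vs)
  also have "\<dots> = infsum u UNIV * infsum v UNIV"
    by (simp add: infsum_cmult_left us)
  finally show "infsum (\<lambda>n. infsum (\<lambda>k. u k * v (n-k)) UNIV) UNIV = infsum u UNIV * infsum v UNIV" .
qed

lemma infsum_single:
  fixes g :: "'i \<Rightarrow> 'b::{comm_monoid_add,t2_space}"
  assumes "\<And>k. k \<noteq> a \<Longrightarrow> g k = 0"
  shows "infsum g UNIV = g a"
proof -
  have "infsum g UNIV = infsum g {a}"
    by (rule infsum_cong_neutral) (use assms in auto)
  then show ?thesis by simp
qed


definition mon :: "('a \<Rightarrow> complex) \<Rightarrow> int \<Rightarrow> int \<Rightarrow> 'a \<Rightarrow> complex" where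
  "mon f k = (\<lambda>j. if j = k then f else (\<lambda>_. 0))"

definition nrm :: "(int \<Rightarrow> 'a \<Rightarrow> complex) \<Rightarrow> real" where
  "nrm F = infsum (\<lambda>k. supn (F k)) UNIV"

definition PC :: "('a \<Rightarrow> 'a) \<Rightarrow> (int \<Rightarrow> 'a \<Rightarrow> complex) \<Rightarrow> bool" where
  "PC \<sigma> F = (\<forall>k y. F k y \<noteq> 0 \<longrightarrow> ipow \<sigma> k y = y)"

lemma emb_mon: "emb f = mon f 0"
  by (simp add: emb_def mon_def fun_eq_iff)

context Setup
begin

lemma l1mult_emb_left: "l1mult \<sigma> (emb f) F = (\<lambda>n x. f x * F n x)"
proof (intro ext)
  fix n x
  show "l1mult \<sigma> (emb f) F n x = f x * F n x"
    unfolding l1mult_def by (subst infsum_single[where a=0]) (auto simp: emb_def)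
qed

lemma l1mult_emb_right: "l1mult \<sigma> F (emb f) = (\<lambda>n x. F n x * f (ipow \<sigma> (-n) x))"
proof (intro ext)
  fix n x
  show "l1mult \<sigma> F (emb f) n x = F n x * f (ipow \<sigma> (-n) x)"
    unfolding l1mult_def by (subst infsum_single[where a=n]) (auto simp: emb_def)
qed

lemma l1D_cont: "F \<in> l1 \<Longrightarrow> continuous_on UNIV (F k)"
  by (simp add: l1_def)

lemma l1D_sum: "F \<in> l1 \<Longrightarrow> (\<lambda>k. supn (F k)) summable_on UNIV"
  by (simp add: l1_def)

lemma l1_supn_ge: "(F :: int \<Rightarrow> 'a \<Rightarrow> complex) \<in> l1 \<Longrightarrow> cmod (F k y) \<le> supn (F k)"
  by (rule supn_ge[OF l1D_cont])

lemma l1_supn_nonneg: "(F :: int \<Rightarrow> 'a \<Rightarrow> complex) \<in> l1 \<Longrightarrow> 0 \<le> supn (F k)"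
  by (rule supn_nonneg[OF l1D_cont])

lemma nrm_nonneg: "(F :: int \<Rightarrow> 'a \<Rightarrow> complex) \<in> l1 \<Longrightarrow> 0 \<le> nrm F"
  unfolding nrm_def by (rule infsum_nonneg) (use l1_supn_nonneg in auto)

lemma supn_le_nrm: "(F :: int \<Rightarrow> 'a \<Rightarrow> complex) \<in> l1 \<Longrightarrow> supn (F j) \<le> nrm F"
proof -
  assume F: "F \<in> l1"
  have "infsum (\<lambda>k. supn (F k)) {j} \<le> infsum (\<lambda>k. supn (F k)) UNIV"
    by (rule infsum_mono_neutral) (use F l1D_sum l1_supn_nonneg in auto)
  then show ?thesis by (simp add: nrm_def)
qed

lemma l1I:
  assumes "\<And>k. continuous_on UNIV ((F :: int \<Rightarrow> 'a \<Rightarrow> complex) k)" "M summable_on UNIV" "\<And>k. supn (F k) \<le> M k"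
  shows "F \<in> l1"
proof -
  have "(\<lambda>k. supn (F k)) summable_on UNIV"
    by (rule summable_on_comparison_test[OF assms(2)]) (use assms supn_nonneg in auto)
  then show ?thesis using assms(1) by (simp add: l1_def)
qed

lemma l1_mon: "continuous_on UNIV (f :: 'a \<Rightarrow> complex) \<Longrightarrow> mon f k \<in> l1"
proof (rule l1I[where M="\<lambda>j. if j = k then supn f else 0"])
  show "(\<lambda>j. if j = k then supn f else 0) summable_on UNIV"
    by (rule finite_nonzero_values_imp_summable_on) auto
qed (auto simp: mon_def)

lemma Comm_iff: "F \<in> Comm \<sigma> \<longleftrightarrow> F \<in> l1 \<and> PC \<sigma> (F :: int \<Rightarrow> 'a \<Rightarrow> complex)"
proof
  assume F: "F \<in> Comm \<sigma>"
  then have l: "F \<in> l1" by (simp add: Comm_def)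
  have "ipow \<sigma> k y = y" if "F k y \<noteq> 0" for k y
  proof (rule ccontr)
    assume "ipow \<sigma> k y \<noteq> y"
    then have "y \<noteq> ipow \<sigma> (-k) y" using ipow_neg_fix by metis
    then obtain f :: "'a \<Rightarrow> complex" where f: "continuous_on UNIV f" "f y = 1" "f (ipow \<sigma> (-k) y) = 0" by (rule separate)
    have "l1mult \<sigma> (emb f) F = l1mult \<sigma> F (emb f)" using F f(1) by (simp add: Comm_def)
    then have "f y * F k y = F k y * f (ipow \<sigma> (-k) y)"
      unfolding l1mult_emb_left l1mult_emb_right by metis
    then show False using f that by simp
  qed
  then show "F \<in> l1 \<and> PC \<sigma> F" using l by (auto simp: PC_def)
next
  assume F: "F \<in> l1 \<and> PC \<sigma> F"
  have "l1mult \<sigma> (emb f) F = l1mult \<sigma> F (emb f)" for f :: "'a \<Rightarrow> complex"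
    unfolding l1mult_emb_left l1mult_emb_right
  proof (intro ext)
    fix n x
    show "f x * F n x = F n x * f (ipow \<sigma> (- n) x)"
    proof (cases "F n x = 0")
      case False
      then have "ipow \<sigma> n x = x" using F by (auto simp: PC_def)
      then have "ipow \<sigma> (-n) x = x" using ipow_neg_fix by metis
      then show ?thesis by simp
    qed simp
  qed
  then show "F \<in> Comm \<sigma>" using F by (simp add: Comm_def)
qed

lemma l1mult_PC:
  assumes "PC \<sigma> F"
  shows "l1mult \<sigma> F G = (\<lambda>n y. infsum (\<lambda>k. F k y * G (n-k) y) UNIV)"
proof (intro ext)
  fix n y
  have "F k y * G (n - k) (ipow \<sigma> (- k) y) = F k y * G (n-k) y" for k
  proof (cases "F k y = 0")
    case False
    then have "ipow \<sigma> k y = y" using assms by (auto simp: PC_def)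
    then have "ipow \<sigma> (-k) y = y" using ipow_neg_fix by metis
    then show ?thesis by simp
  qed simp
  then show "l1mult \<sigma> F G n y = infsum (\<lambda>k. F k y * G (n-k) y) UNIV"
    unfolding l1mult_def by (intro infsum_cong)
qed

lemma prod_Comm:
  assumes F: "F \<in> Comm \<sigma>" and G: "G \<in> Comm \<sigma>"
  shows "l1mult \<sigma> F G \<in> Comm \<sigma>" "nrm (l1mult \<sigma> F G) \<le> nrm F * nrm G"
proof -
  have Fl: "F \<in> l1" and FP: "PC \<sigma> F" and Gl: "G \<in> l1" and GP: "PC \<sigma> G" using F G Comm_iff by auto
  define a where "a = (\<lambda>k. supn (F k))"
  define b where "b = (\<lambda>k. supn (G k))"
  have as: "a summable_on UNIV" and bs: "b summable_on UNIV" using l1D_sum Fl Gl by (auto simp: a_def b_def)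
  have a0: "0 \<le> a k" and b0: "0 \<le> b k" for k using l1_supn_nonneg Fl Gl by (auto simp: a_def b_def)
  have Fa: "cmod (F k y) \<le> a k" and Gb: "cmod (G k y) \<le> b k" for k y
    using l1_supn_ge Fl Gl by (auto simp: a_def b_def)
  have bG: "b k \<le> nrm G" for k using supn_le_nrm[OF Gl] by (simp add: b_def)
  define P where "P = l1mult \<sigma> F G"
  have P: "P n y = infsum (\<lambda>k. F k y * G (n-k) y) UNIV" for n y
    unfolding P_def l1mult_PC[OF FP] by simp
  have Ms: "(\<lambda>k. a k * b (n-k)) summable_on UNIV" for n
    by (rule summable_on_comparison_test[OF summable_on_cmult_left[OF as, of "nrm G"]])
       (use a0 b0 bG in \<open>auto intro: mult_left_mono\<close>)
  have tb: "cmod (F k y * G (n-k) y) \<le> a k * b (n-k)" for k n y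
    by (simp add: norm_mult mult_mono Fa Gb a0 b0 order_trans[OF norm_ge_zero Gb])
  have Pc: "continuous_on UNIV (P n)" for n
  proof -
    have "continuous_on UNIV (\<lambda>y. infsum (\<lambda>k. F k y * G (n-k) y) UNIV)"
      by (rule cont_infsum[OF _ Ms tb]) (intro continuous_intros l1D_cont Fl Gl)
    then show ?thesis by (simp add: P[abs_def])
  qed
  define c where "c = (\<lambda>n. infsum (\<lambda>k. a k * b (n-k)) UNIV)"
  have Pb: "supn (P n) \<le> c n" for n
    unfolding c_def by (rule supn_le) (simp add: P sum_bound(2)[OF Ms tb])
  have cs: "c summable_on UNIV" and cS: "infsum c UNIV = infsum a UNIV * infsum b UNIV"
    using cauchy_int[OF as bs a0 b0, of a b] a0 b0 by (auto simp: c_def)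
  have Pl: "P \<in> l1" by (rule l1I[OF Pc cs Pb])
  have "PC \<sigma> P"
    unfolding PC_def
  proof (intro allI impI)
    fix n y assume "P n y \<noteq> 0"
    then obtain k where "F k y * G (n-k) y \<noteq> 0"
      unfolding P by (metis (mono_tags, lifting) infsum_0)
    then have "y \<in> Fix \<sigma> k" "y \<in> Fix \<sigma> (n-k)" using FP GP by (auto simp: PC_def Fix_def)
    then have "y \<in> Fix \<sigma> (k + (n-k))" by (rule Fix_add)
    then show "ipow \<sigma> n y = y" by (simp add: Fix_def)
  qed
  then show "l1mult \<sigma> F G \<in> Comm \<sigma>" using Pl Comm_iff by (simp add: P_def)
  have "nrm P \<le> infsum c UNIV"
    unfolding nrm_def by (rule infsum_mono[OF l1D_sum[OF Pl] cs Pb])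
  then show "nrm (l1mult \<sigma> F G) \<le> nrm F * nrm G"
    using cS by (simp add: P_def nrm_def a_def b_def)
qed

end

definition one :: "int \<Rightarrow> 'a \<Rightarrow> complex" where "one = emb (\<lambda>_. 1)"

definition resA :: "int set \<Rightarrow> (int \<Rightarrow> 'a \<Rightarrow> complex) \<Rightarrow> (int \<Rightarrow> 'a \<Rightarrow> complex)" where
  "resA A F = (\<lambda>k. if k \<in> A then F k else (\<lambda>_. 0))"

context Setup
begin

lemma one_Comm: "(one :: int \<Rightarrow> 'a \<Rightarrow> complex) \<in> Comm \<sigma>"
  unfolding Comm_iff
proof
  show "(one :: int \<Rightarrow> 'a \<Rightarrow> complex) \<in> l1" unfolding one_def emb_mon by (rule l1_mon) simp
  show "PC \<sigma> (one :: int \<Rightarrow> 'a \<Rightarrow> complex)" by (auto simp: PC_def one_def emb_def)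
qed

lemma one_mult: "l1mult \<sigma> one F = F"
  unfolding one_def l1mult_emb_left by simp

lemma mon_Comm:
  assumes "continuous_on UNIV (f :: 'a \<Rightarrow> complex)" "\<And>y. f y \<noteq> 0 \<Longrightarrow> ipow \<sigma> k y = y"
  shows "mon f k \<in> Comm \<sigma>"
  unfolding Comm_iff using l1_mon[OF assms(1)] assms(2) by (auto simp: PC_def mon_def)

lemma mon_mult:
  assumes "mon (f :: 'a \<Rightarrow> complex) a \<in> Comm \<sigma>"
  shows "l1mult \<sigma> (mon f a) (mon g b) = mon (\<lambda>y. f y * g y) (a+b)"
proof -
  have P: "PC \<sigma> (mon f a)" using assms Comm_iff by blast
  show ?thesis unfolding l1mult_PC[OF P]
  proof (intro ext)
    fix n y
    show "infsum (\<lambda>k. mon f a k y * mon g b (n - k) y) UNIV = mon (\<lambda>y. f y * g y) (a + b) n y"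
      by (subst infsum_single[where a=a]) (auto simp: mon_def)
  qed
qed

lemma add_Comm:
  assumes "F \<in> Comm \<sigma>" "G \<in> Comm \<sigma>"
  shows "(\<lambda>k x. F k x + G k x) \<in> Comm \<sigma>"
proof -
  have F: "F \<in> l1" "PC \<sigma> F" and G: "G \<in> l1" "PC \<sigma> G" using assms Comm_iff by auto
  have "(\<lambda>k x. F k x + G k x) \<in> l1"
  proof (rule l1I[where M="\<lambda>k. supn (F k) + supn (G k)"])
    show "continuous_on UNIV (\<lambda>x. F k x + G k x)" for k
      by (intro continuous_intros l1D_cont F G)
    show "(\<lambda>k. supn (F k) + supn (G k)) summable_on UNIV"
      by (intro summable_on_add l1D_sum F G)
    show "supn (\<lambda>x. F k x + G k x) \<le> supn (F k) + supn (G k)" for k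
      by (rule supn_le) (metis norm_triangle_ineq add_mono order_trans l1_supn_ge F(1) G(1))
  qed
  moreover have "PC \<sigma> (\<lambda>k x. F k x + G k x)"
    using F(2) G(2) unfolding PC_def by (metis add.right_neutral)
  ultimately show ?thesis using Comm_iff by blast
qed

lemma cmult_Comm:
  assumes "F \<in> Comm \<sigma>"
  shows "(\<lambda>k x. c * F k x) \<in> Comm \<sigma>"
proof -
  have F: "F \<in> l1" "PC \<sigma> F" using assms Comm_iff by auto
  have "(\<lambda>k x. c * F k x) \<in> l1"
  proof (rule l1I[where M="\<lambda>k. cmod c * supn (F k)"])
    show "continuous_on UNIV (\<lambda>x. c * F k x)" for k
      by (intro continuous_intros l1D_cont F)
    show "(\<lambda>k. cmod c * supn (F k)) summable_on UNIV"
      by (intro summable_on_cmult_right l1D_sum F)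
    show "supn (\<lambda>x. c * F k x) \<le> cmod c * supn (F k)" for k
      by (rule supn_le) (simp add: norm_mult mult_left_mono l1_supn_ge F(1))
  qed
  moreover have "PC \<sigma> (\<lambda>k x. c * F k x)"
    using F(2) unfolding PC_def by simp
  ultimately show ?thesis using Comm_iff by blast
qed

lemma nrm_cmult:
  assumes "F \<in> Comm \<sigma>"
  shows "nrm (\<lambda>k x. c * F k x) \<le> cmod c * nrm F"
proof -
  have F: "F \<in> l1" using assms Comm_iff by auto
  have C: "(\<lambda>k x. c * F k x) \<in> l1" using cmult_Comm[OF assms] Comm_iff by auto
  have "nrm (\<lambda>k x. c * F k x) \<le> infsum (\<lambda>k. cmod c * supn (F k)) UNIV"
    unfolding nrm_def
    by (rule infsum_mono[OF l1D_sum[OF C] summable_on_cmult_right[OF l1D_sum[OF F]]])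
       (rule supn_le, simp add: norm_mult mult_left_mono l1_supn_ge F)
  also have "\<dots> = cmod c * nrm F" unfolding nrm_def by (rule infsum_cmult_right) (simp add: l1D_sum F)
  finally show ?thesis .
qed

lemma resA_Comm:
  assumes "F \<in> Comm \<sigma>"
  shows "resA A F \<in> Comm \<sigma>" "nrm (resA A F) = infsum (\<lambda>k. supn (F k)) A"
proof -
  have F: "F \<in> l1" "PC \<sigma> F" using assms Comm_iff by auto
  have l: "resA A F \<in> l1"
    by (rule l1I[where M="\<lambda>k. supn (F k)"]) (auto simp: resA_def l1D_cont F l1D_sum supn_nonneg)
  moreover have "PC \<sigma> (resA A F)" using F(2) by (auto simp: PC_def resA_def)
  ultimately show "resA A F \<in> Comm \<sigma>" using Comm_iff by blast
  show "nrm (resA A F) = infsum (\<lambda>k. supn (F k)) A"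
    unfolding nrm_def by (rule infsum_cong_neutral) (auto simp: resA_def)
qed

lemma resA_split: "F = (\<lambda>k x. resA A F k x + resA (-A) F k x)"
  by (auto simp: resA_def fun_eq_iff)

lemma resA_insert: "a \<notin> A \<Longrightarrow> resA (insert a A) F = (\<lambda>k x. mon (F a) a k x + resA A F k x)"
  by (auto simp: resA_def mon_def fun_eq_iff)

lemma nrm_tail:
  assumes "F \<in> Comm \<sigma>" "finite A"
  shows "nrm (resA (-A) F) = nrm F - sum (\<lambda>k. supn (F k)) A"
proof -
  have F: "F \<in> l1" using assms Comm_iff by auto
  have "nrm F = infsum (\<lambda>k. supn (F k)) A + infsum (\<lambda>k. supn (F k)) (-A)"
    unfolding nrm_def
    using infsum_Un_disjoint[of "\<lambda>k. supn (F k)" A "-A"] summable_on_subset[OF l1D_sum[OF F]]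
    by (simp add: Compl_partition)
  then show ?thesis using resA_Comm(2)[OF assms(1)] assms(2) by simp
qed

lemma psi_eval: "F \<in> Comm \<sigma> \<Longrightarrow> psi \<sigma> (x,z) F = infsum (\<lambda>k. F k x * z powi k) UNIV"
  by (simp add: psi_def)

lemma sphere_powi: "z \<in> sphere 0 1 \<Longrightarrow> cmod (z powi k) = 1"
  by (simp add: norm_power_int)

lemma psi_terms:
  assumes "(F :: int \<Rightarrow> 'a \<Rightarrow> complex) \<in> l1" "z \<in> sphere 0 1"
  shows "cmod (F k x * z powi k) \<le> supn (F k)"
  using l1_supn_ge[OF assms(1)] sphere_powi[OF assms(2)] by (simp add: norm_mult)

lemma psi_bound:
  assumes "F \<in> Comm \<sigma>" "z \<in> sphere 0 1"
  shows "cmod (psi \<sigma> (x,z) F) \<le> nrm F"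
proof -
  have F: "F \<in> l1" using assms Comm_iff by auto
  show ?thesis unfolding psi_eval[OF assms(1)] nrm_def
    by (rule sum_bound(2)[OF l1D_sum[OF F]]) (rule psi_terms[OF F assms(2)])
qed

lemma psi_summable:
  assumes "(F :: int \<Rightarrow> 'a \<Rightarrow> complex) \<in> l1" "z \<in> sphere 0 1"
  shows "(\<lambda>k. F k x * z powi k) summable_on UNIV"
  by (rule sum_bound(1)[OF l1D_sum[OF assms(1)]]) (rule psi_terms[OF assms])

lemma psi_char:
  assumes z: "z \<in> sphere 0 1"
  shows "psi \<sigma> (x,z) \<in> characters \<sigma>"
  unfolding characters_def
proof (intro CollectI conjI ballI allI)
  show "psi \<sigma> (x,z) \<in> extensional (Comm \<sigma>)" by (simp add: psi_def)
  have "psi \<sigma> (x,z) one = 1"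
    unfolding psi_eval[OF one_Comm] by (subst infsum_single[where a=0]) (auto simp: one_def emb_def)
  then show "\<exists>F\<in>Comm \<sigma>. psi \<sigma> (x, z) F \<noteq> 0" using one_Comm by force
next
  fix F G assume F: "F \<in> Comm \<sigma>" and G: "G \<in> Comm \<sigma>"
  have Fl: "F \<in> l1" and FP: "PC \<sigma> F" and Gl: "G \<in> l1" using F G Comm_iff by auto
  show "psi \<sigma> (x,z) (\<lambda>k x. F k x + G k x) = psi \<sigma> (x,z) F + psi \<sigma> (x,z) G"
    unfolding psi_eval[OF add_Comm[OF F G]] psi_eval[OF F] psi_eval[OF G]
    by (simp add: distrib_right infsum_add psi_summable[OF Fl z] psi_summable[OF Gl z])
  have z0: "z \<noteq> 0" using z by auto
  have "psi \<sigma> (x,z) (l1mult \<sigma> F G) = infsum (\<lambda>n. infsum (\<lambda>k. F k x * G (n-k) x) UNIV * z powi n) UNIV"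
    unfolding psi_eval[OF prod_Comm(1)[OF F G]] by (simp add: l1mult_PC[OF FP])
  also have "\<dots> = infsum (\<lambda>n. infsum (\<lambda>k. (F k x * z powi k) * (G (n-k) x * z powi (n-k))) UNIV) UNIV"
  proof (rule infsum_cong)
    fix n
    have bb: "cmod (F k x) * cmod (G (n-k) x) \<le> supn (F k) * nrm G" for k
      by (rule mult_mono[OF l1_supn_ge[OF Fl] order_trans[OF l1_supn_ge[OF Gl] supn_le_nrm[OF Gl]] l1_supn_nonneg[OF Fl] norm_ge_zero])
    have "infsum (\<lambda>k. F k x * G (n-k) x) UNIV * z powi n = infsum (\<lambda>k. F k x * G (n-k) x * z powi n) UNIV"
      by (rule infsum_cmult_left[symmetric]) 
         (rule sum_bound(1)[OF summable_on_cmult_left[OF l1D_sum[OF Fl], of "nrm G"]], 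
          simp add: norm_mult bb)
    also have "\<dots> = infsum (\<lambda>k. (F k x * z powi k) * (G (n-k) x * z powi (n-k))) UNIV"
      by (rule infsum_cong) (simp add: power_int_add[symmetric] z0)
    finally show "infsum (\<lambda>k. F k x * G (n-k) x) UNIV * z powi n = infsum (\<lambda>k. (F k x * z powi k) * (G (n-k) x * z powi (n-k))) UNIV" .
  qed
  also have "\<dots> = psi \<sigma> (x,z) F * psi \<sigma> (x,z) G"
    unfolding psi_eval[OF F] psi_eval[OF G]
    by (rule cauchy_int(2)[OF l1D_sum[OF Fl] l1D_sum[OF Gl] l1_supn_nonneg[OF Fl] l1_supn_nonneg[OF Gl] psi_terms[OF Fl z] psi_terms[OF Gl z]])
  finally show "psi \<sigma> (x,z) (l1mult \<sigma> F G) = psi \<sigma> (x,z) F * psi \<sigma> (x,z) G" .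
next
  fix F and c :: complex assume F: "F \<in> Comm \<sigma>"
  have Fl: "F \<in> l1" using F Comm_iff by auto
  show "psi \<sigma> (x,z) (\<lambda>k x. c * F k x) = c * psi \<sigma> (x,z) F"
    unfolding psi_eval[OF cmult_Comm[OF F]] psi_eval[OF F]
    by (simp add: mult.assoc infsum_cmult_right psi_summable[OF Fl z])
qed

end

lemma infsum_Suc:
  fixes f :: "nat \<Rightarrow> 'c::banach"
  assumes "f summable_on UNIV"
  shows "infsum (\<lambda>m. f (Suc m)) UNIV = infsum f UNIV - f 0"
proof -
  have U: "(UNIV :: nat set) = insert 0 (range Suc)" by (auto intro: nat.exhaust)
  have s: "f summable_on range Suc" by (rule summable_on_subset_banach[OF assms]) auto
  have "infsum f UNIV = f 0 + infsum f (range Suc)"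
    by (subst U) (rule infsum_insert[OF s], auto)
  moreover have "infsum f (range Suc) = infsum (\<lambda>m. f (Suc m)) UNIV"
    using infsum_reindex[of Suc UNIV f] by (simp add: o_def)
  ultimately show ?thesis by simp
qed

context Setup
begin

lemma char_ext: "\<phi> \<in> characters \<sigma> \<Longrightarrow> \<phi> \<in> extensional (Comm \<sigma>)"
  by (simp add: characters_def)
lemma char_nz: "\<phi> \<in> characters \<sigma> \<Longrightarrow> \<exists>F\<in>Comm \<sigma>. \<phi> F \<noteq> 0"
  by (simp add: characters_def)
lemma char_add: "\<phi> \<in> characters \<sigma> \<Longrightarrow> F \<in> Comm \<sigma> \<Longrightarrow> G \<in> Comm \<sigma> \<Longrightarrow> \<phi> (\<lambda>k x. F k x + G k x) = \<phi> F + \<phi> G"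
  by (simp add: characters_def)
lemma char_mult: "\<phi> \<in> characters \<sigma> \<Longrightarrow> F \<in> Comm \<sigma> \<Longrightarrow> G \<in> Comm \<sigma> \<Longrightarrow> \<phi> (l1mult \<sigma> F G) = \<phi> F * \<phi> G"
  by (simp add: characters_def)
lemma char_smult: "\<phi> \<in> characters \<sigma> \<Longrightarrow> F \<in> Comm \<sigma> \<Longrightarrow> \<phi> (\<lambda>k x. c * F k x) = c * \<phi> F"
  by (simp add: characters_def)

lemma char_one: "\<phi> \<in> characters \<sigma> \<Longrightarrow> \<phi> one = 1"
proof -
  assume p: "\<phi> \<in> characters \<sigma>"
  then obtain F where F: "F \<in> Comm \<sigma>" "\<phi> F \<noteq> 0" using char_nz by blast
  have "\<phi> F = \<phi> one * \<phi> F" using char_mult[OF p one_Comm F(1)] one_mult by simp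
  then show ?thesis using F(2) by simp
qed

lemma nrm_one: "nrm (one :: int \<Rightarrow> 'a \<Rightarrow> complex) \<le> 1"
proof -
  have "nrm (one :: int \<Rightarrow> 'a \<Rightarrow> complex) = supn (\<lambda>_::'a. 1::complex)"
    unfolding nrm_def by (subst infsum_single[where a=0]) (auto simp: one_def emb_def)
  also have "\<dots> \<le> 1" by (rule supn_le) simp
  finally show ?thesis .
qed

lemma neumann:
  assumes p: "\<phi> \<in> characters \<sigma>" and K: "K \<in> Comm \<sigma>" and r: "nrm K < 1"
  shows "\<phi> K \<noteq> 1"
proof
  assume pK: "\<phi> K = 1"
  define r where "r = nrm K"
  have Kl: "K \<in> l1" and KP: "PC \<sigma> K" using K Comm_iff by auto
  have r0: "0 \<le> r" using nrm_nonneg[OF Kl] by (simp add: r_def)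
  define Kp where "Kp m = (l1mult \<sigma> K ^^ m) one" for m
  have Kp0: "Kp 0 = one" and KpS: "Kp (Suc m) = l1mult \<sigma> K (Kp m)" for m by (simp_all add: Kp_def)
  have KpC: "Kp m \<in> Comm \<sigma>" for m
    by (induction m) (simp_all add: Kp0 KpS one_Comm prod_Comm(1)[OF K])
  have Kpl: "Kp m \<in> l1" and KpP: "PC \<sigma> (Kp m)" for m using KpC Comm_iff by auto
  have Kpn: "nrm (Kp m) \<le> r ^ m" for m
  proof (induction m)
    case 0 then show ?case using nrm_one by (simp add: Kp0)
  next
    case (Suc m)
    have "nrm (Kp (Suc m)) \<le> nrm K * nrm (Kp m)" unfolding KpS by (rule prod_Comm(2)[OF K KpC])
    also have "\<dots> \<le> r * r ^ m" unfolding r_def[symmetric] by (rule mult_left_mono[OF Suc r0])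
    finally show ?case by simp
  qed
  have Kpb: "cmod (Kp m k y) \<le> r ^ m" for m k y
    using l1_supn_ge[OF Kpl] supn_le_nrm[OF Kpl] Kpn by (meson order_trans)
  have geo: "(\<lambda>m. r ^ m) summable_on UNIV"
    by (rule summable_nonneg_imp_summable_on) (use r0 r in \<open>auto simp: r_def\<close>)
  define S where "S = (\<lambda>k y. infsum (\<lambda>m. Kp m k y) UNIV)"
  have Sc: "continuous_on UNIV (S k)" for k
    unfolding S_def by (rule cont_infsum[OF _ geo]) (auto intro: l1D_cont Kpl Kpb)
  define s where "s = (\<lambda>(m,k). supn (Kp m k))"
  have s0: "0 \<le> s (m,k)" for m k by (simp add: s_def l1_supn_nonneg Kpl)
  have ss: "s summable_on UNIV \<times> UNIV"
  proof -
    have "s summable_on Sigma UNIV (\<lambda>_. UNIV)"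
    proof (rule summable_on_SigmaI[where g="\<lambda>m. nrm (Kp m)"])
      show "((\<lambda>k. s (m, k)) has_sum nrm (Kp m)) UNIV" for m
        unfolding s_def nrm_def using l1D_sum[OF Kpl] by (simp add: has_sum_infsum)
      show "(\<lambda>m. nrm (Kp m)) summable_on UNIV"
        by (rule summable_on_comparison_test[OF geo]) (use Kpn nrm_nonneg Kpl in auto)
      show "0 \<le> s (m,k)" for m k by (rule s0)
    qed
    then show ?thesis by simp
  qed
  have ss2: "(\<lambda>(k,m). s (m,k)) summable_on UNIV \<times> UNIV"
    using summable_on_swap[of s UNIV UNIV] ss by simp
  have sk: "(\<lambda>k. infsum (\<lambda>m. s (m,k)) UNIV) summable_on UNIV"
    using summable_on_Sigma_banach[of "\<lambda>k m. s (m,k)" UNIV "\<lambda>_. UNIV"] ss2 by simp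
  have skm: "(\<lambda>m. s (m,k)) summable_on UNIV" for k
  proof -
    have "(\<lambda>m. s (m,k)) summable_on UNIV \<longleftrightarrow> (\<lambda>m. s (m,k)) summable_on UNIV" ..
    show ?thesis
      by (rule summable_on_comparison_test[OF geo]) 
         (auto simp: s_def intro: order_trans[OF supn_le_nrm[OF Kpl] Kpn] l1_supn_nonneg Kpl)
  qed
  have Sb: "supn (S k) \<le> infsum (\<lambda>m. s (m,k)) UNIV" for k
    unfolding S_def
    by (rule supn_le, rule sum_bound(2)[OF skm]) (simp add: s_def l1_supn_ge Kpl)
  have Sl: "S \<in> l1" by (rule l1I[OF Sc sk Sb])
  have SP: "PC \<sigma> S"
    unfolding PC_def
  proof (intro allI impI)
    fix k y assume "S k y \<noteq> 0"
    then obtain m where "Kp m k y \<noteq> 0" unfolding S_def by (metis (mono_tags, lifting) infsum_0)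
    then show "ipow \<sigma> k y = y" using KpP by (auto simp: PC_def)
  qed
  have SC: "S \<in> Comm \<sigma>" using Sl SP Comm_iff by blast
  have KpSs: "(\<lambda>m. Kp m k y) summable_on UNIV" for k y
    by (rule sum_bound(1)[OF geo]) (rule Kpb)
  have eq: "S = (\<lambda>k x. one k x + l1mult \<sigma> K S k x)"
  proof (intro ext)
    fix n y
    have "l1mult \<sigma> K S n y = infsum (\<lambda>k. K k y * infsum (\<lambda>m. Kp m (n-k) y) UNIV) UNIV"
      by (simp add: l1mult_PC[OF KP] S_def)
    also have "\<dots> = infsum (\<lambda>k. infsum (\<lambda>m. K k y * Kp m (n-k) y) UNIV) UNIV"
      by (rule infsum_cong) (rule infsum_cmult_right[symmetric], simp add: KpSs)
    also have "\<dots> = infsum (\<lambda>m. infsum (\<lambda>k. K k y * Kp m (n-k) y) UNIV) UNIV"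
    proof (rule infsum_swap_banach)
      have "(\<lambda>p. K (fst p) y * Kp (snd p) (n - fst p) y) summable_on UNIV \<times> UNIV"
        by (rule dom_summable[OF l1D_sum[OF Kl] geo l1_supn_nonneg[OF Kl]])
           (simp_all add: r0 norm_mult mult_mono[OF l1_supn_ge[OF Kl] Kpb l1_supn_nonneg[OF Kl] norm_ge_zero])
      then show "(\<lambda>(k, m). K k y * Kp m (n - k) y) summable_on UNIV \<times> UNIV"
        by (simp add: case_prod_unfold)
    qed
    also have "\<dots> = infsum (\<lambda>m. Kp (Suc m) n y) UNIV"
      by (rule infsum_cong) (simp add: KpS l1mult_PC[OF KP])
    also have "\<dots> = S n y - one n y"
      unfolding S_def by (subst infsum_Suc[OF KpSs]) (simp add: Kp0)
    finally show "S n y = one n y + l1mult \<sigma> K S n y" by simp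
  qed
  have "\<phi> S = \<phi> one + \<phi> (l1mult \<sigma> K S)"
    by (subst eq) (rule char_add[OF p one_Comm prod_Comm(1)[OF K SC]])
  also have "\<dots> = 1 + \<phi> S" using char_one[OF p] char_mult[OF p K SC] pK by simp
  finally show False by simp
qed

lemma char_bound:
  assumes p: "\<phi> \<in> characters \<sigma>" and F: "F \<in> Comm \<sigma>"
  shows "cmod (\<phi> F) \<le> nrm F"
proof (rule ccontr)
  assume "\<not> cmod (\<phi> F) \<le> nrm F"
  then have lt: "nrm F < cmod (\<phi> F)" by simp
  then have nz: "\<phi> F \<noteq> 0" using nrm_nonneg[of F] F Comm_iff by fastforce
  define K where "K = (\<lambda>k x. (1 / \<phi> F) * F k x)"
  have KC: "K \<in> Comm \<sigma>" unfolding K_def by (rule cmult_Comm[OF F])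
  have "\<phi> K = (1 / \<phi> F) * \<phi> F" unfolding K_def by (rule char_smult[OF p F])
  then have "\<phi> K = 1" using nz by simp
  moreover have "nrm K < 1"
  proof -
    have "nrm K \<le> cmod (1 / \<phi> F) * nrm F" unfolding K_def by (rule nrm_cmult[OF F])
    also have "\<dots> = nrm F / cmod (\<phi> F)" by (simp add: norm_divide)
    also have "\<dots> < 1" using lt nz by simp
    finally show ?thesis .
  qed
  ultimately show False using neumann[OF p KC] by blast
qed

end

context Setup
begin

lemma emb_Comm: "continuous_on UNIV (f :: 'a \<Rightarrow> complex) \<Longrightarrow> emb f \<in> Comm \<sigma>"
  unfolding emb_mon by (rule mon_Comm) auto

lemma char_zero: "\<phi> \<in> characters \<sigma> \<Longrightarrow> \<phi> (\<lambda>k x. 0) = 0"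
  using char_smult[OF _ one_Comm, of \<phi> 0] by simp

lemma char_emb_const: "\<phi> \<in> characters \<sigma> \<Longrightarrow> \<phi> (emb (\<lambda>_. c)) = c"
proof -
  assume p: "\<phi> \<in> characters \<sigma>"
  have e: "emb (\<lambda>_. c) = (\<lambda>k x. c * one k x)" by (auto simp: one_def emb_def fun_eq_iff)
  show ?thesis unfolding e using char_smult[OF p one_Comm, of c] char_one[OF p] by simp
qed

lemma char_emb_add: "\<phi> \<in> characters \<sigma> \<Longrightarrow> continuous_on UNIV (f :: 'a \<Rightarrow> complex) \<Longrightarrow> continuous_on UNIV g
  \<Longrightarrow> \<phi> (emb (\<lambda>y. f y + g y)) = \<phi> (emb f) + \<phi> (emb g)"
proof -
  assume p: "\<phi> \<in> characters \<sigma>" and f: "continuous_on UNIV f" and g: "continuous_on UNIV g"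
  have "emb (\<lambda>y. f y + g y) = (\<lambda>k x. emb f k x + emb g k x)" by (auto simp: emb_def fun_eq_iff)
  then show ?thesis using char_add[OF p emb_Comm[OF f] emb_Comm[OF g]] by simp
qed

lemma char_emb_mult: "\<phi> \<in> characters \<sigma> \<Longrightarrow> continuous_on UNIV (f :: 'a \<Rightarrow> complex) \<Longrightarrow> continuous_on UNIV g
  \<Longrightarrow> \<phi> (emb (\<lambda>y. f y * g y)) = \<phi> (emb f) * \<phi> (emb g)"
proof -
  assume p: "\<phi> \<in> characters \<sigma>" and f: "continuous_on UNIV f" and g: "continuous_on UNIV g"
  have "emb (\<lambda>y. f y * g y) = l1mult \<sigma> (emb f) (emb g)" unfolding l1mult_emb_left by (auto simp: emb_def fun_eq_iff)
  then show ?thesis using char_mult[OF p emb_Comm[OF f] emb_Comm[OF g]] by simp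
qed

lemma char_emb_sum:
  assumes p: "\<phi> \<in> characters \<sigma>" and G: "finite G" "\<And>g. g \<in> G \<Longrightarrow> continuous_on UNIV (P g :: 'a \<Rightarrow> complex)"
  shows "\<phi> (emb (\<lambda>y. \<Sum>g\<in>G. P g y)) = (\<Sum>g\<in>G. \<phi> (emb (P g)))"
  using G
proof (induction G rule: finite_induct)
  case empty then show ?case using char_emb_const[OF p, of 0] by simp
next
  case (insert a G)
  have "\<phi> (emb (\<lambda>y. \<Sum>g\<in>insert a G. P g y)) = \<phi> (emb (\<lambda>y. P a y + (\<Sum>g\<in>G. P g y)))"
    using insert by simp
  also have "\<dots> = \<phi> (emb (P a)) + \<phi> (emb (\<lambda>y. \<Sum>g\<in>G. P g y))"
    by (rule char_emb_add[OF p]) (use insert in \<open>auto intro!: continuous_intros\<close>)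
  finally show ?case using insert by simp
qed

lemma char_point:
  assumes p: "\<phi> \<in> characters \<sigma>"
  shows "\<exists>x. \<forall>f. continuous_on UNIV f \<longrightarrow> \<phi> (emb f) = f x"
proof (rule ccontr)
  assume "\<not> ?thesis"
  then have ex: "\<forall>x. \<exists>f. continuous_on UNIV f \<and> \<phi> (emb f) \<noteq> f x" by blast
  define Z where "Z = {g :: 'a \<Rightarrow> complex. continuous_on UNIV g \<and> \<phi> (emb g) = 0}"
  have cover: "\<exists>g\<in>Z. g x \<noteq> 0" for x
  proof -
    obtain f where f: "continuous_on UNIV f" "\<phi> (emb f) \<noteq> f x" using ex by blast
    define g where "g = (\<lambda>y. f y + (- \<phi> (emb f)))"
    have gc: "continuous_on UNIV g" unfolding g_def by (intro continuous_intros f)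
    have "\<phi> (emb g) = \<phi> (emb f) + \<phi> (emb (\<lambda>_. - \<phi> (emb f)))"
      unfolding g_def by (rule char_emb_add[OF p f(1)]) simp
    then have "\<phi> (emb g) = 0" using char_emb_const[OF p] by simp
    moreover have "g x \<noteq> 0" using f(2) by (simp add: g_def)
    ultimately show ?thesis using gc by (auto simp: Z_def)
  qed
  obtain G where G: "G \<subseteq> Z" "finite G" "UNIV \<subseteq> (\<Union>g\<in>G. {y. g y \<noteq> 0})"
  proof (rule compactE_image[OF cpt])
    show "open {y. g y \<noteq> 0}" if "g \<in> Z" for g
      using open_Collect_neq[of g "\<lambda>_. 0"] that by (simp add: Z_def)
    show "UNIV \<subseteq> (\<Union>g\<in>Z. {y. g y \<noteq> 0})" using cover by blast
  qed blast
  define h where "h = (\<lambda>y. \<Sum>g\<in>G. g y * cnj (g y))"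
  have Gc: "continuous_on UNIV g" if "g \<in> G" for g using G(1) that by (auto simp: Z_def)
  have Gz: "\<phi> (emb g) = 0" if "g \<in> G" for g using G(1) that by (auto simp: Z_def)
  have hc: "continuous_on UNIV h" unfolding h_def by (intro continuous_intros Gc)
  have h0: "\<phi> (emb h) = 0"
  proof -
    have "\<phi> (emb h) = (\<Sum>g\<in>G. \<phi> (emb (\<lambda>y. g y * cnj (g y))))"
      unfolding h_def by (rule char_emb_sum[OF p G(2)]) (intro continuous_intros Gc)
    also have "\<dots> = (\<Sum>g\<in>G. \<phi> (emb g) * \<phi> (emb (\<lambda>y. cnj (g y))))"
      by (rule sum.cong[OF refl], rule char_emb_mult[OF p Gc continuous_on_cnj[OF Gc]])
    also have "\<dots> = 0" using Gz by simp
    finally show ?thesis .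
  qed
  have hpos: "h y \<noteq> 0" for y
  proof -
    obtain g where g: "g \<in> G" "g y \<noteq> 0" using G(3) by blast
    have "Re (h y) = (\<Sum>g\<in>G. (cmod (g y))\<^sup>2)"
      unfolding h_def by (simp add: Re_sum complex_mult_cnj cmod_power2)
    also have "\<dots> > 0"
      by (rule sum_pos2[OF G(2) g(1)]) (use g in auto)
    finally show ?thesis by auto
  qed
  have ic: "continuous_on UNIV (\<lambda>y. 1 / h y)" by (intro continuous_intros hc) (use hpos in auto)
  have "\<phi> (emb (\<lambda>y. h y * (1 / h y))) = \<phi> (emb h) * \<phi> (emb (\<lambda>y. 1 / h y))"
    by (rule char_emb_mult[OF p hc ic])
  moreover have "\<phi> (emb (\<lambda>y. h y * (1 / h y))) = 1"
    using hpos char_emb_const[OF p, of 1] by simp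
  ultimately show False using h0 by simp
qed

lemma nrm_mon: "nrm (mon f k) = supn f"
  unfolding nrm_def by (subst infsum_single[where a=k]) (auto simp: mon_def)

lemma mon_add: "mon (\<lambda>y. f y + g y) k = (\<lambda>j y. mon f k j y + mon g k j y)"
  by (auto simp: mon_def fun_eq_iff)

lemma vanish:
  assumes p: "\<phi> \<in> characters \<sigma>" and x: "\<And>f. continuous_on UNIV f \<Longrightarrow> \<phi> (emb f) = f x"
    and M: "mon f k \<in> Comm \<sigma>" and fx: "f x = 0"
  shows "\<phi> (mon f k) = 0"
proof -
  have Ml: "mon f k \<in> l1" and MP: "PC \<sigma> (mon f k)" using M Comm_iff by auto
  have fc: "continuous_on UNIV f" using l1D_cont[OF Ml, of k] by (simp add: mon_def)
  have fP: "f y \<noteq> 0 \<Longrightarrow> ipow \<sigma> k y = y" for y using MP by (auto simp: PC_def mon_def)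
  have "cmod (\<phi> (mon f k)) \<le> 2 * e" if e: "e > 0" for e
  proof -
    define r where "r = (\<lambda>y. min 1 (max 0 (cmod (f y) / e - 1)))"
    have rc: "continuous_on UNIV r" unfolding r_def by (intro continuous_intros fc) (use e in auto)
    define f1 where "f1 = (\<lambda>y. f y * complex_of_real (r y))"
    define f2 where "f2 = (\<lambda>y. f y * (1 - complex_of_real (r y)))"
    have f1c: "continuous_on UNIV f1" and f2c: "continuous_on UNIV f2"
      unfolding f1_def f2_def by (intro continuous_intros fc rc)+
    have M1: "mon f1 k \<in> Comm \<sigma>" by (rule mon_Comm[OF f1c]) (auto simp: f1_def intro: fP)
    have M2: "mon f2 k \<in> Comm \<sigma>" by (rule mon_Comm[OF f2c]) (auto simp: f2_def intro: fP)
    have split: "mon f k = (\<lambda>j y. mon f1 k j y + mon f2 k j y)"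
      unfolding mon_add[symmetric] by (simp add: f1_def f2_def algebra_simps)
    obtain u :: "'a \<Rightarrow> real" where u: "continuous_on UNIV u" "\<And>y. u y \<in> {0..1}"
      "\<And>y. y \<in> {x} \<Longrightarrow> u y = 1" "\<And>y. y \<in> {y. e \<le> cmod (f y)} \<Longrightarrow> u y = 0"
    proof -
      have cl: "closed {y. e \<le> cmod (f y)}" by (intro closed_Collect_le continuous_intros fc)
      have dj: "{x} \<inter> {y. e \<le> cmod (f y)} = {}" using fx e by auto
      show ?thesis using urysohn[OF closed_singleton cl dj] that by blast
    qed
    define uc where "uc = (\<lambda>y. complex_of_real (u y))"
    have ucc: "continuous_on UNIV uc" unfolding uc_def by (intro continuous_intros u(1))
    have "l1mult \<sigma> (emb uc) (mon f1 k) = (\<lambda>j y. 0 * one j y)"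
    proof -
      have "uc y * f1 y = 0" for y
      proof (cases "e \<le> cmod (f y)")
        case True then show ?thesis using u(4) by (simp add: uc_def)
      next
        case False
        then have "r y = 0" unfolding r_def using e by (auto simp: min_def max_def field_simps)
        then show ?thesis by (simp add: f1_def)
      qed
      then show ?thesis unfolding l1mult_emb_left by (auto simp: mon_def fun_eq_iff)
    qed
    then have "\<phi> (emb uc) * \<phi> (mon f1 k) = 0"
      using char_mult[OF p emb_Comm[OF ucc] M1] char_smult[OF p one_Comm, of 0] by simp
    moreover have "\<phi> (emb uc) = 1" using x[OF ucc] u(3) by (simp add: uc_def)
    ultimately have z1: "\<phi> (mon f1 k) = 0" by simp
    have "cmod (\<phi> (mon f2 k)) \<le> nrm (mon f2 k)" by (rule char_bound[OF p M2])
    also have "\<dots> = supn f2" by (rule nrm_mon)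
    also have "\<dots> \<le> 2 * e"
    proof (rule supn_le)
      fix y
      have r01: "0 \<le> r y" "r y \<le> 1" by (auto simp: r_def)
      have "cmod (f2 y) = cmod (f y) * (1 - r y)"
        unfolding f2_def using r01
        by (simp add: norm_mult) (metis abs_of_nonneg diff_ge_0_iff_ge norm_of_real of_real_1 of_real_diff)
      also have "\<dots> \<le> 2 * e"
      proof (cases "2 * e \<le> cmod (f y)")
        case True
        then have "r y = 1" unfolding r_def using e by (auto simp: min_def max_def field_simps)
        then show ?thesis using e by simp
      next
        case False
        have "cmod (f y) * (1 - r y) \<le> cmod (f y)" using r01 by (simp add: mult_left_le)
        then show ?thesis using False by linarith
      qed
      finally show "cmod (f2 y) \<le> 2 * e" .
    qed
    finally have "cmod (\<phi> (mon f2 k)) \<le> 2 * e" .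
    moreover have "\<phi> (mon f k) = \<phi> (mon f1 k) + \<phi> (mon f2 k)"
      by (subst split) (rule char_add[OF p M1 M2])
    ultimately show ?thesis using z1 by simp
  qed
  note bnd = this
  show ?thesis
  proof (rule ccontr)
    assume "\<phi> (mon f k) \<noteq> 0"
    then have pos: "cmod (\<phi> (mon f k)) > 0" by simp
    then have "cmod (\<phi> (mon f k)) \<le> 2 * (cmod (\<phi> (mon f k)) / 4)" by (intro bnd) simp
    then show False using pos by simp
  qed
qed

end

lemma nth_root_sphere:
  fixes c :: complex
  assumes "cmod c = 1" "0 < n"
  shows "\<exists>z. z ^ n = c \<and> z \<in> sphere 0 1"
proof -
  have c0: "c \<noteq> 0" using assms by auto
  define z where "z = exp (ln c / of_nat n)"
  have e: "of_nat n * (ln c / of_nat n) = ln c" using assms(2) by simp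
  have "z ^ n = exp (of_nat n * (ln c / of_nat n))" unfolding z_def by (rule exp_of_nat_mult[symmetric])
  then have zn: "z ^ n = c" unfolding e using c0 by simp
  have "cmod z ^ n = cmod (z ^ n)" by (simp add: norm_power)
  then have "cmod z ^ n = 1 ^ n" using assms zn by simp
  then have "cmod z = 1" by (rule power_eq_imp_eq_base) (use assms in auto)
  then show ?thesis using zn by auto
qed

context Setup
begin

lemma Per_iff: "x \<in> Per \<sigma> \<longleftrightarrow> (\<exists>q::nat. 1 \<le> q \<and> x \<in> interior (Fix \<sigma> (int q)))"
  by (auto simp: Per_def)

lemma nmin:
  assumes "x \<in> Per \<sigma>"
  shows "1 \<le> nmin \<sigma> x" "x \<in> interior (Fix \<sigma> (int (nmin \<sigma> x)))"
    "\<And>m. 1 \<le> m \<Longrightarrow> x \<in> interior (Fix \<sigma> (int m)) \<Longrightarrow> nmin \<sigma> x \<le> m"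
proof -
  obtain q :: nat where q: "1 \<le> q \<and> x \<in> interior (Fix \<sigma> (int q))" using assms Per_iff by blast
  show "1 \<le> nmin \<sigma> x" "x \<in> interior (Fix \<sigma> (int (nmin \<sigma> x)))"
    using LeastI[of "\<lambda>n. 1 \<le> n \<and> x \<in> interior (Fix \<sigma> (int n))", OF q] by (simp_all add: nmin_def)
  show "\<And>m. 1 \<le> m \<Longrightarrow> x \<in> interior (Fix \<sigma> (int m)) \<Longrightarrow> nmin \<sigma> x \<le> m"
    unfolding nmin_def by (rule Least_le) simp
qed

lemma per_dvd:
  assumes x: "x \<in> Per \<sigma>" and k: "x \<in> interior (Fix \<sigma> k)"
  shows "int (nmin \<sigma> x) dvd k"
proof -
  define n where "n = nmin \<sigma> x"
  have n1: "1 \<le> n" and xn: "x \<in> interior (Fix \<sigma> (int n))" using nmin[OF x] by (simp_all add: n_def)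
  define d where "d = gcd k (int n)"
  have "0 < d" using n1 by (simp add: d_def)
  then have d1: "d \<ge> 1" by simp
  have xd: "x \<in> interior (Fix \<sigma> d)" unfolding d_def by (rule interior_Fix_gcd[OF k xn])
  have "n \<le> nat d" using nmin(3)[OF x, of "nat d"] d1 xd by (simp add: n_def)
  moreover have "d \<le> int n" using n1 unfolding d_def by (intro zdvd_imp_le) auto
  ultimately have "d = int n" using d1 by linarith
  then show ?thesis by (metis d_def gcd_dvd1 n_def)
qed

lemma notper:
  assumes "x \<notin> Per \<sigma>" "k \<noteq> 0"
  shows "x \<notin> interior (Fix \<sigma> k)"
proof
  assume xk: "x \<in> interior (Fix \<sigma> k)"
  have "x \<in> interior (Fix \<sigma> (int (nat \<bar>k\<bar>)))"
  proof (cases "k > 0")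
    case True then show ?thesis using xk by simp
  next
    case False then show ?thesis using xk Fix_neg[of k] by simp
  qed
  moreover have "1 \<le> nat \<bar>k\<bar>" using assms(2) by simp
  ultimately show False using assms(1) Per_iff[of x] by blast
qed

lemma mon_fx0:
  assumes M: "mon f k \<in> Comm \<sigma>" and x: "x \<notin> interior (Fix \<sigma> k)"
  shows "f x = 0"
proof (rule ccontr)
  assume fx: "f x \<noteq> 0"
  have Ml: "mon f k \<in> l1" and MP: "PC \<sigma> (mon f k)" using M Comm_iff by auto
  have fc: "continuous_on UNIV f" using l1D_cont[OF Ml, of k] by (simp add: mon_def)
  have "open {y. f y \<noteq> 0}" using open_Collect_neq[OF fc, of "\<lambda>_. 0"] by simp
  moreover have "{y. f y \<noteq> 0} \<subseteq> Fix \<sigma> k" using MP by (auto simp: PC_def mon_def Fix_def)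
  ultimately have "{y. f y \<noteq> 0} \<subseteq> interior (Fix \<sigma> k)" by (simp add: interior_maximal)
  then show False using fx x by blast
qed

lemma bump:
  assumes "x \<in> Per \<sigma>"
  obtains u :: "'a \<Rightarrow> complex" where "continuous_on UNIV u" "\<And>y. cmod (u y) \<le> 1" "u x = 1"
    "\<And>y. u y \<noteq> 0 \<Longrightarrow> y \<in> interior (Fix \<sigma> (int (nmin \<sigma> x)))"
proof -
  let ?I = "interior (Fix \<sigma> (int (nmin \<sigma> x)))"
  have cl: "closed (- ?I)" by (rule closed_Compl[OF open_interior])
  have dj: "{x} \<inter> - ?I = {}" using nmin(2)[OF assms] by auto
  obtain v :: "'a \<Rightarrow> real" where v: "continuous_on UNIV v" "\<And>y. v y \<in> {0..1}" "\<And>y. y \<in> {x} \<Longrightarrow> v y = 1"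
    "\<And>y. y \<in> - ?I \<Longrightarrow> v y = 0"
    using urysohn[OF closed_singleton cl dj] by blast
  show ?thesis
  proof (rule that[of "\<lambda>y. complex_of_real (v y)"])
    show "continuous_on UNIV (\<lambda>y. complex_of_real (v y))" by (intro continuous_intros v(1))
    show "cmod (complex_of_real (v y)) \<le> 1" for y using v(2)[of y] by auto
  qed (use v in auto)
qed

lemma mon_Comm_interior:
  assumes "continuous_on UNIV (f :: 'a \<Rightarrow> complex)" "\<And>y. f y \<noteq> 0 \<Longrightarrow> y \<in> interior (Fix \<sigma> k)"
  shows "mon f k \<in> Comm \<sigma>"
  by (rule mon_Comm[OF assms(1)]) (use assms(2) interior_subset in \<open>auto simp: Fix_def\<close>)

lemma single_per:
  assumes p: "\<phi> \<in> characters \<sigma>" and x: "\<And>f. continuous_on UNIV f \<Longrightarrow> \<phi> (emb f) = f x"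
    and xP: "x \<in> Per \<sigma>"
  shows "\<exists>z \<in> sphere 0 1. \<forall>f k. mon f k \<in> Comm \<sigma> \<longrightarrow> \<phi> (mon f k) = f x * z powi k"
proof -
  define n where "n = nmin \<sigma> x"
  have n1: "1 \<le> n" using nmin(1)[OF xP] by (simp add: n_def)
  obtain u where u: "continuous_on UNIV u" "\<And>y. cmod (u y) \<le> 1" "u x = 1"
    "\<And>y. u y \<noteq> 0 \<Longrightarrow> y \<in> interior (Fix \<sigma> (int n))"
    using bump[OF xP] unfolding n_def by blast
  have uN: "u y \<noteq> 0 \<Longrightarrow> y \<in> interior (Fix \<sigma> (- int n))" for y using u(4) Fix_neg by simp
  define W where "W j = mon (\<lambda>y. u y ^ nat \<bar>j\<bar>) (j * int n)" for j :: int
  have WC: "W j \<in> Comm \<sigma>" for j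
  proof (cases "j = 0")
    case True then show ?thesis by (simp add: W_def emb_mon[symmetric] emb_Comm)
  next
    case False
    show ?thesis unfolding W_def
    proof (rule mon_Comm_interior)
      show "continuous_on UNIV (\<lambda>y. u y ^ nat \<bar>j\<bar>)" by (intro continuous_intros u(1))
      fix y assume "u y ^ nat \<bar>j\<bar> \<noteq> 0"
      then have "u y \<noteq> 0" using False by auto
      then have "y \<in> interior (Fix \<sigma> (int n))" by (rule u(4))
      then have "y \<in> interior (Fix \<sigma> (int n * j))" 
        using interior_mono[of "Fix \<sigma> (int n)" "Fix \<sigma> (int n * j)"] Fix_mult by blast
      then show "y \<in> interior (Fix \<sigma> (j * int n))" by (simp add: mult.commute)
    qed
  qed
  define c where "c = \<phi> (W 1)"
  define d where "d = \<phi> (W (-1))"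
  have W1: "W 1 = mon u (int n)" and Wm1: "W (-1) = mon u (- int n)" by (simp_all add: W_def)
  have "l1mult \<sigma> (W 1) (W (-1)) = emb (\<lambda>y. u y * u y)"
    unfolding W1 Wm1 emb_mon by (subst mon_mult) (use WC[of 1] W1 in auto)
  then have cd: "c * d = 1"
    using char_mult[OF p WC WC, of 1 "-1"] x[of "\<lambda>y. u y * u y"] u(3) by (simp add: c_def d_def continuous_intros u(1))
  have nW: "nrm (W 1) \<le> 1" "nrm (W (-1)) \<le> 1"
    unfolding W1 Wm1 nrm_mon by (simp_all add: supn_le u(2))
  have cb: "cmod c \<le> 1" "cmod d \<le> 1"
    using char_bound[OF p WC, of 1] char_bound[OF p WC, of "-1"] nW by (simp_all add: c_def d_def)
  have cn: "cmod c = 1"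
  proof -
    have "cmod c * cmod d = 1" using cd by (metis norm_mult norm_one)
    moreover have "cmod c * cmod d \<le> cmod c" by (rule mult_left_le[OF cb(2) norm_ge_zero])
    ultimately show ?thesis using cb(1) by linarith
  qed
  have c0: "c \<noteq> 0" using cn by auto
  have dc: "d = inverse c" using cd c0 by (simp add: field_simps)
  have Wpos: "\<phi> (W (int j)) = c ^ j" for j :: nat
  proof (induction j)
    case 0 then show ?case using char_one[OF p] by (simp add: W_def emb_mon[symmetric] one_def)
  next
    case (Suc j)
    have M1: "mon u (int n) \<in> Comm \<sigma>" using WC[of 1] W1 by simp
    have "l1mult \<sigma> (W 1) (W (int j)) = mon (\<lambda>y. u y * u y ^ j) (int n + int j * int n)"
      unfolding W1 by (simp add: W_def mon_mult[OF M1])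
    moreover have "nat (1 + int j) = Suc j" "nat \<bar>1 + int j\<bar> = Suc j" by arith+
    ultimately have "W (int (Suc j)) = l1mult \<sigma> (W 1) (W (int j))"
      by (simp add: W_def algebra_simps)
    then show ?case using char_mult[OF p WC WC, of 1 "int j"] Suc by (simp add: c_def)
  qed
  have Wneg: "\<phi> (W (- int j)) = d ^ j" for j :: nat
  proof (induction j)
    case 0 then show ?case using char_one[OF p] by (simp add: W_def emb_mon[symmetric] one_def)
  next
    case (Suc j)
    have M1: "mon u (- int n) \<in> Comm \<sigma>" using WC[of "-1"] Wm1 by simp
    have "l1mult \<sigma> (W (-1)) (W (- int j)) = mon (\<lambda>y. u y * u y ^ j) (- int n + - int j * int n)"
      unfolding Wm1 by (simp add: W_def mon_mult[OF M1])
    moreover have "nat (1 + int j) = Suc j" "nat \<bar>1 + int j\<bar> = Suc j" by arith+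
    ultimately have "W (- int (Suc j)) = l1mult \<sigma> (W (-1)) (W (- int j))"
      by (simp add: W_def algebra_simps)
    then show ?case using char_mult[OF p WC WC, of "-1" "- int j"] Suc by (simp add: d_def)
  qed
  have Wall: "\<phi> (W j) = c powi j" for j
  proof (cases "j \<ge> 0")
    case True
    then obtain m where "j = int m" using nonneg_int_cases by blast
    then show ?thesis using Wpos[of m] by simp
  next
    case False
    then have "j = - int (nat (- j))" by simp
    then obtain m where jm: "j = - int m" by blast
    have "c powi (- int m) = inverse (c ^ m)" by (simp add: power_int_minus)
    then show ?thesis using Wneg[of m] dc jm by (simp add: power_inverse)
  qed
  obtain z where z: "z ^ n = c" "z \<in> sphere 0 1" using nth_root_sphere[OF cn, of n] n1 by auto
  show ?thesis
  proof (intro bexI[OF _ z(2)] allI impI)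
    fix f k assume M: "mon f k \<in> Comm \<sigma>"
    have Ml: "mon f k \<in> l1" and MP: "PC \<sigma> (mon f k)" using M Comm_iff by auto
    have fc: "continuous_on UNIV f" using l1D_cont[OF Ml, of k] by (simp add: mon_def)
    have fP: "f y \<noteq> 0 \<Longrightarrow> ipow \<sigma> k y = y" for y using MP by (auto simp: PC_def mon_def)
    show "\<phi> (mon f k) = f x * z powi k"
    proof (cases "x \<in> interior (Fix \<sigma> k)")
      case False
      then have "f x = 0" by (rule mon_fx0[OF M])
      then show ?thesis using vanish[OF p x M] by simp
    next
      case True
      then obtain j where kj: "k = j * int n" using per_dvd[OF xP] by (metis n_def dvd_def mult.commute)
      define m where "m = nat \<bar>j\<bar>"
      define g where "g = (\<lambda>y. f y * (1 - u y ^ m))"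
      have gc: "continuous_on UNIV g" unfolding g_def by (intro continuous_intros fc u(1))
      have G: "mon g k \<in> Comm \<sigma>" by (rule mon_Comm[OF gc]) (auto simp: g_def intro: fP)
      have gx: "g x = 0" by (simp add: g_def u(3))
      have P: "l1mult \<sigma> (emb f) (W j) = mon (\<lambda>y. f y * u y ^ m) k"
        unfolding l1mult_emb_left by (auto simp: W_def mon_def kj m_def fun_eq_iff)
      have PC': "l1mult \<sigma> (emb f) (W j) \<in> Comm \<sigma>" by (rule prod_Comm(1)[OF emb_Comm[OF fc] WC])
      have split: "mon f k = (\<lambda>i y. l1mult \<sigma> (emb f) (W j) i y + mon g k i y)"
        unfolding P by (auto simp: mon_def g_def fun_eq_iff algebra_simps)
      have "\<phi> (mon f k) = \<phi> (l1mult \<sigma> (emb f) (W j)) + \<phi> (mon g k)"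
        by (subst split) (rule char_add[OF p PC' G])
      also have "\<dots> = f x * c powi j"
        using char_mult[OF p emb_Comm[OF fc] WC] x[OF fc] Wall vanish[OF p x G gx] by simp
      also have "\<dots> = f x * z powi k"
        by (simp add: kj mult.commute[of j] power_int_mult z(1))
      finally show ?thesis .
    qed
  qed
qed

lemma single_notper:
  assumes p: "\<phi> \<in> characters \<sigma>" and x: "\<And>f. continuous_on UNIV f \<Longrightarrow> \<phi> (emb f) = f x"
    and xP: "x \<notin> Per \<sigma>"
  shows "\<forall>f k. mon f k \<in> Comm \<sigma> \<longrightarrow> \<phi> (mon f k) = f x * 1 powi k"
proof (intro allI impI)
  fix f k assume M: "mon f k \<in> Comm \<sigma>"
  have Ml: "mon f k \<in> l1" using M Comm_iff by auto
  have fc: "continuous_on UNIV f" using l1D_cont[OF Ml, of k] by (simp add: mon_def)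
  show "\<phi> (mon f k) = f x * 1 powi k"
  proof (cases "k = 0")
    case True then show ?thesis using x[OF fc] by (simp add: emb_mon)
  next
    case False
    then have "f x = 0" using mon_fx0[OF M notper[OF xP]] by blast
    then show ?thesis using vanish[OF p x M] by simp
  qed
qed

end

context Setup
begin

lemma psi_mon: "continuous_on UNIV f \<Longrightarrow> mon f k \<in> Comm \<sigma> \<Longrightarrow> psi \<sigma> (x,z) (mon f k) = f x * z powi k"
  unfolding psi_eval by (subst infsum_single[where a=k]) (auto simp: mon_def)

lemma mon_of_Comm: "F \<in> Comm \<sigma> \<Longrightarrow> mon (F a) a \<in> Comm \<sigma>"
proof -
  assume F: "F \<in> Comm \<sigma>"
  have Fl: "F \<in> l1" and FP: "PC \<sigma> F" using F Comm_iff by auto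
  show ?thesis by (rule mon_Comm[OF l1D_cont[OF Fl]]) (use FP in \<open>auto simp: PC_def\<close>)
qed

lemma extend:
  assumes p: "\<phi> \<in> characters \<sigma>" and z: "z \<in> sphere 0 1"
    and single: "\<forall>f k. mon f k \<in> Comm \<sigma> \<longrightarrow> \<phi> (mon f k) = f x * z powi k"
  shows "\<phi> = psi \<sigma> (x,z)"
proof -
  have q: "psi \<sigma> (x,z) \<in> characters \<sigma>" by (rule psi_char[OF z])
  have fin: "\<phi> (resA A F) = psi \<sigma> (x,z) (resA A F)" if F: "F \<in> Comm \<sigma>" and A: "finite A" for F A
    using A
  proof (induction A rule: finite_induct)
    case empty
    have "resA {} F = (\<lambda>k x. 0)" by (simp add: resA_def fun_eq_iff)
    then show ?case using char_zero[OF p] char_zero[OF q] by simp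
  next
    case (insert a A)
    have M: "mon (F a) a \<in> Comm \<sigma>" by (rule mon_of_Comm[OF F])
    have fc: "continuous_on UNIV (F a)" using F Comm_iff l1D_cont by blast
    have R: "resA A F \<in> Comm \<sigma>" by (rule resA_Comm(1)[OF F])
    show ?case
      unfolding resA_insert[OF insert(2)] char_add[OF p M R] char_add[OF q M R]
      using insert(3) single M psi_mon[OF fc M] by simp
  qed
  have eq: "\<phi> F = psi \<sigma> (x,z) F" if F: "F \<in> Comm \<sigma>" for F
  proof -
    have Fl: "F \<in> l1" using F Comm_iff by auto
    have bnd: "cmod (\<phi> F - psi \<sigma> (x,z) F) \<le> 2 * e" if e: "e > 0" for e
    proof -
      have ev: "\<forall>\<^sub>F A in finite_subsets_at_top UNIV. finite A \<and> nrm F - sum (\<lambda>k. supn (F k)) A < e"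
      proof (rule eventually_conj)
        show "\<forall>\<^sub>F A in finite_subsets_at_top UNIV. finite A"
          by (rule eventually_finite_subsets_at_top_weakI) simp
        show "\<forall>\<^sub>F A in finite_subsets_at_top UNIV. nrm F - sum (\<lambda>k. supn (F k)) A < e"
          unfolding nrm_def by (rule tail_small[OF l1D_sum[OF Fl] e])
      qed
      obtain A where A: "finite A" "nrm F - sum (\<lambda>k. supn (F k)) A < e"
        using eventually_happens'[OF finite_subsets_at_top_neq_bot ev] by blast
      have R1: "resA A F \<in> Comm \<sigma>" and R2: "resA (-A) F \<in> Comm \<sigma>" by (rule resA_Comm(1)[OF F])+
      have s1: "\<phi> F = \<phi> (resA A F) + \<phi> (resA (-A) F)"
        by (subst resA_split[of F A]) (rule char_add[OF p R1 R2])
      have s2: "psi \<sigma> (x,z) F = psi \<sigma> (x,z) (resA A F) + psi \<sigma> (x,z) (resA (-A) F)"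
        by (subst resA_split[of F A]) (rule char_add[OF q R1 R2])
      have "\<phi> F - psi \<sigma> (x,z) F = \<phi> (resA (-A) F) - psi \<sigma> (x,z) (resA (-A) F)"
        using s1 s2 fin[OF F A(1)] by simp
      also have "cmod \<dots> \<le> cmod (\<phi> (resA (-A) F)) + cmod (psi \<sigma> (x,z) (resA (-A) F))"
        by (rule norm_triangle_ineq4)
      also have "\<dots> \<le> nrm (resA (-A) F) + nrm (resA (-A) F)"
        by (rule add_mono[OF char_bound[OF p R2] char_bound[OF q R2]])
      also have "\<dots> \<le> 2 * e" using nrm_tail[OF F A(1)] A(2) by simp
      finally show ?thesis .
    qed
    show ?thesis
    proof (rule ccontr)
      assume "\<phi> F \<noteq> psi \<sigma> (x,z) F"
      then have pos: "cmod (\<phi> F - psi \<sigma> (x,z) F) > 0" by simp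
      then have "cmod (\<phi> F - psi \<sigma> (x,z) F) \<le> 2 * (cmod (\<phi> F - psi \<sigma> (x,z) F) / 4)" by (intro bnd) simp
      then show False using pos by simp
    qed
  qed
  show ?thesis
    by (rule extensionalityI[OF char_ext[OF p] char_ext[OF q]]) (rule eq)
qed

lemma classify:
  assumes p: "\<phi> \<in> characters \<sigma>"
  shows "\<exists>x z. z \<in> sphere 0 1 \<and> \<phi> = psi \<sigma> (x,z)"
proof -
  obtain x where x: "\<And>f. continuous_on UNIV f \<Longrightarrow> \<phi> (emb f) = f x" using char_point[OF p] by blast
  show ?thesis
  proof (cases "x \<in> Per \<sigma>")
    case True
    then obtain z where "z \<in> sphere 0 1" "\<forall>f k. mon f k \<in> Comm \<sigma> \<longrightarrow> \<phi> (mon f k) = f x * z powi k"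
      using single_per[OF p x] by blast
    then show ?thesis using extend[OF p] by blast
  next
    case False
    have "(1::complex) \<in> sphere 0 1" by simp
    then show ?thesis using extend[OF p _ single_notper[OF p x False]] by blast
  qed
qed

end

lemma XT_eq: "(XT :: ('a::topological_space \<times> complex) topology) = top_of_set (UNIV \<times> sphere 0 1)"
  unfolding XT_def by (metis prod_topology_subtopology_eu subtopology_UNIV)

lemma topspace_XT: "topspace (XT :: ('a::topological_space \<times> complex) topology) = UNIV \<times> sphere 0 1"
  by (simp add: XT_eq)

context Setup
begin

lemma topspace_gelfand: "topspace (gelfand_top \<sigma>) = characters \<sigma>"
proof -
  have "characters \<sigma> \<subseteq> (\<Pi>\<^sub>E F\<in>Comm \<sigma>. UNIV)"
    using char_ext by (auto simp: PiE_def)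
  then show ?thesis unfolding gelfand_top_def by (auto simp: topspace_subtopology)
qed

lemma psi_cont:
  assumes F: "F \<in> Comm \<sigma>"
  shows "continuous_on (UNIV \<times> sphere 0 1) (\<lambda>p. psi \<sigma> p F)"
proof -
  have Fl: "F \<in> l1" using F Comm_iff by auto
  have "continuous_on (UNIV \<times> sphere 0 1) (\<lambda>p. infsum (\<lambda>k. F k (fst p) * snd p powi k) UNIV)"
  proof (rule cont_infsum[OF _ l1D_sum[OF Fl]])
    fix k
    have c1: "continuous_on (UNIV \<times> sphere 0 1) (\<lambda>p. F k (fst p))"
      by (rule continuous_on_compose2[OF l1D_cont[OF Fl] continuous_on_fst]) auto
    have c2: "continuous_on (UNIV \<times> sphere 0 1) (\<lambda>p::'a \<times> complex. snd p powi k)"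
      by (intro continuous_intros) auto
    show "continuous_on (UNIV \<times> sphere 0 1) (\<lambda>p. F k (fst p) * snd p powi k)"
      by (intro continuous_on_mult c1 c2)
    fix p :: "'a \<times> complex" assume "p \<in> UNIV \<times> sphere 0 1"
    then show "cmod (F k (fst p) * snd p powi k) \<le> supn (F k)"
      using psi_terms[OF Fl, of "snd p" k "fst p"] by auto
  qed
  then show ?thesis
    by (rule continuous_on_cong[THEN iffD1, rotated 2]) (auto simp: psi_eval[OF F])
qed

lemma psi_cont_map: "continuous_map XT (gelfand_top \<sigma>) (psi \<sigma>)"
  unfolding gelfand_top_def continuous_map_in_subtopology
proof
  show "continuous_map XT (product_topology (\<lambda>_. euclidean) (Comm \<sigma>)) (psi \<sigma>)"
    unfolding continuous_map_componentwise
  proof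
    show "psi \<sigma> ` topspace XT \<subseteq> extensional (Comm \<sigma>)" by (auto simp: psi_def)
    show "\<forall>F\<in>Comm \<sigma>. continuous_map XT euclidean (\<lambda>p. psi \<sigma> p F)"
      using psi_cont by (simp add: XT_eq)
  qed
  show "psi \<sigma> \<in> topspace XT \<rightarrow> characters \<sigma>"
    using psi_char by (auto simp: topspace_XT)
qed

lemma psi_image: "psi \<sigma> ` topspace XT = characters \<sigma>"
proof
  show "psi \<sigma> ` topspace XT \<subseteq> characters \<sigma>" using psi_char by (auto simp: topspace_XT)
  show "characters \<sigma> \<subseteq> psi \<sigma> ` topspace XT"
  proof
    fix \<phi> assume "\<phi> \<in> characters \<sigma>"
    then obtain x z where "z \<in> sphere 0 1" "\<phi> = psi \<sigma> (x,z)" using classify by blast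
    then show "\<phi> \<in> psi \<sigma> ` topspace XT" by (auto simp: topspace_XT)
  qed
qed

lemma Hausdorff_gelfand: "Hausdorff_space (gelfand_top \<sigma>)"
  unfolding gelfand_top_def
  by (intro Hausdorff_space_subtopology) (simp add: Hausdorff_space_product_topology)

lemma compact_XT: "compact_space (XT :: ('a \<times> complex) topology)"
proof -
  have "compact ((UNIV::'a set) \<times> sphere (0::complex) 1)" by (intro compact_Times cpt compact_sphere)
  then show ?thesis unfolding XT_eq compact_space_def by simp
qed

lemma psi_quotient: "quotient_map XT (gelfand_top \<sigma>) (psi \<sigma>)"
  by (rule continuous_closed_imp_quotient_map[OF psi_cont_map
        continuous_imp_closed_map[OF psi_cont_map compact_XT Hausdorff_gelfand]])
     (simp add: psi_image topspace_gelfand)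

lemma psi_emb: "continuous_on UNIV f \<Longrightarrow> psi \<sigma> (y,z) (emb f) = f y"
  using psi_mon[of f 0 y z] emb_Comm by (simp add: emb_mon)

lemma Comm_val0: "F \<in> Comm \<sigma> \<Longrightarrow> x \<notin> interior (Fix \<sigma> k) \<Longrightarrow> F k x = 0"
  using mon_fx0[OF mon_of_Comm] by blast

lemma fiber1:
  assumes xP: "x \<notin> Per \<sigma>"
  shows "{p \<in> topspace XT. psi \<sigma> p = omega1 \<sigma> x} = {x} \<times> sphere 0 1"
proof
  show "{p \<in> topspace XT. psi \<sigma> p = omega1 \<sigma> x} \<subseteq> {x} \<times> sphere 0 1"
  proof
    fix p assume "p \<in> {p \<in> topspace XT. psi \<sigma> p = omega1 \<sigma> x}"
    then obtain y z where pyz: "p = (y,z)" and yz: "(y,z) \<in> topspace XT" "psi \<sigma> (y,z) = omega1 \<sigma> x"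
      by (metis (mono_tags, lifting) mem_Collect_eq surj_pair)
    have "y = x"
    proof (rule ccontr)
      assume "y \<noteq> x"
      then obtain f :: "'a \<Rightarrow> complex" where f: "continuous_on UNIV f" "f y = 1" "f x = 0" by (rule separate)
      have "psi \<sigma> (y,z) (emb f) = omega1 \<sigma> x (emb f)" using yz(2) by simp
      then show False using psi_emb[OF f(1)] emb_Comm[OF f(1)] f by (simp add: omega1_def emb_def)
    qed
    then show "p \<in> {x} \<times> sphere 0 1" using yz(1) pyz by (simp add: topspace_XT)
  qed
  show "{x} \<times> sphere 0 1 \<subseteq> {p \<in> topspace XT. psi \<sigma> p = omega1 \<sigma> x}"
  proof
    fix p assume "p \<in> {x} \<times> sphere (0::complex) 1"
    then obtain z where pz: "p = (x,z)" and z: "z \<in> sphere 0 1" by auto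
    have "psi \<sigma> (x,z) = omega1 \<sigma> x"
    proof (rule extensionalityI[OF char_ext[OF psi_char[OF z]]])
      show "omega1 \<sigma> x \<in> extensional (Comm \<sigma>)" by (simp add: omega1_def)
      fix F assume F: "F \<in> Comm \<sigma>"
      show "psi \<sigma> (x,z) F = omega1 \<sigma> x F"
        unfolding psi_eval[OF F] using F
        by (subst infsum_single[where a=0]) (auto simp: omega1_def Comm_val0[OF F notper[OF xP]])
    qed
    then show "p \<in> {p \<in> topspace XT. psi \<sigma> p = omega1 \<sigma> x}" using z pz by (simp add: topspace_XT)
  qed
qed

lemma psi_omega2:
  assumes xP: "x \<in> Per \<sigma>" and F: "F \<in> Comm \<sigma>" and z: "z \<in> sphere 0 1"
  shows "psi \<sigma> (x,z) F = omega2 \<sigma> x (z ^ nmin \<sigma> x) F"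
proof -
  define n where "n = nmin \<sigma> x"
  have n1: "1 \<le> n" using nmin(1)[OF xP] by (simp add: n_def)
  have z0: "z \<noteq> 0" using z by auto
  have zero: "F k x = 0" if "k \<notin> range (\<lambda>j. j * int n)" for k
  proof (rule Comm_val0[OF F])
    show "x \<notin> interior (Fix \<sigma> k)"
    proof
      assume "x \<in> interior (Fix \<sigma> k)"
      then have "int n dvd k" using per_dvd[OF xP] by (simp add: n_def)
      then show False using that by (auto simp: dvd_def mult.commute)
    qed
  qed
  have inj: "inj (\<lambda>j::int. j * int n)" using n1 by (auto simp: inj_def)
  have "psi \<sigma> (x,z) F = infsum (\<lambda>k. F k x * z powi k) (range (\<lambda>j. j * int n))"
    unfolding psi_eval[OF F] by (rule infsum_cong_neutral) (auto simp: zero)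
  also have "\<dots> = infsum (\<lambda>j. F (j * int n) x * z powi (j * int n)) UNIV"
    by (subst infsum_reindex[OF inj]) (simp add: o_def)
  also have "\<dots> = infsum (\<lambda>j. F (j * int n) x * (z ^ n) powi j) UNIV"
    by (rule infsum_cong) (simp add: mult.commute[of _ "int n"] power_int_mult)
  also have "\<dots> = omega2 \<sigma> x (z ^ n) F" by (simp add: omega2_def F n_def)
  finally show ?thesis by (simp add: n_def)
qed

lemma fiber2:
  assumes xP: "x \<in> Per \<sigma>" and c: "c \<in> sphere 0 1"
  shows "{p \<in> topspace XT. psi \<sigma> p = omega2 \<sigma> x c} = {(x, z) | z. z \<in> sphere 0 1 \<and> z ^ nmin \<sigma> x = c}"
proof -
  define n where "n = nmin \<sigma> x"
  have n1: "1 \<le> n" using nmin(1)[OF xP] by (simp add: n_def)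
  have om_emb: "omega2 \<sigma> x w (emb f) = f x" if f: "continuous_on UNIV f" for f w
    unfolding omega2_def using emb_Comm[OF f] n1
    by (simp, subst infsum_single[where a=0]) (auto simp: emb_def n_def)
  obtain u where u: "continuous_on UNIV u" "\<And>y. cmod (u y) \<le> 1" "u x = 1"
    "\<And>y. u y \<noteq> 0 \<Longrightarrow> y \<in> interior (Fix \<sigma> (int n))"
    using bump[OF xP] unfolding n_def by blast
  have U: "mon u (int n) \<in> Comm \<sigma>" by (rule mon_Comm_interior[OF u(1) u(4)])
  have om_U: "omega2 \<sigma> x w (mon u (int n)) = w" for w
  proof -
    have "omega2 \<sigma> x w (mon u (int n)) = infsum (\<lambda>j. mon u (int n) (j * int n) x * w powi j) UNIV"
      using U by (simp add: omega2_def n_def)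
    also have "\<dots> = w"
      by (subst infsum_single[where a=1]) (use n1 u(3) in \<open>auto simp: mon_def\<close>)
    finally show ?thesis .
  qed
  show ?thesis
  proof
    show "{p \<in> topspace XT. psi \<sigma> p = omega2 \<sigma> x c} \<subseteq> {(x, z) | z. z \<in> sphere 0 1 \<and> z ^ nmin \<sigma> x = c}"
    proof clarify
      fix y z assume yz: "(y,z) \<in> topspace XT" "psi \<sigma> (y,z) = omega2 \<sigma> x c"
      have zs: "z \<in> sphere 0 1" using yz(1) by (simp add: topspace_XT)
      have "y = x"
      proof (rule ccontr)
        assume "y \<noteq> x"
        then obtain f :: "'a \<Rightarrow> complex" where f: "continuous_on UNIV f" "f y = 1" "f x = 0" by (rule separate)
        have "psi \<sigma> (y,z) (emb f) = omega2 \<sigma> x c (emb f)" using yz(2) by simp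
        then show False using psi_emb[OF f(1)] om_emb[OF f(1)] f by simp
      qed
      have "z ^ n = c"
      proof -
        have "psi \<sigma> (x,z) (mon u (int n)) = omega2 \<sigma> x c (mon u (int n))" using yz(2) \<open>y = x\<close> by simp
        then show ?thesis using psi_omega2[OF xP U zs] om_U by (simp add: n_def)
      qed
      then show "\<exists>z'. (y, z) = (x, z') \<and> z' \<in> sphere 0 1 \<and> z' ^ nmin \<sigma> x = c"
        using \<open>y = x\<close> zs by (simp add: n_def)
    qed
    show "{(x, z) | z. z \<in> sphere 0 1 \<and> z ^ nmin \<sigma> x = c} \<subseteq> {p \<in> topspace XT. psi \<sigma> p = omega2 \<sigma> x c}"
    proof
      fix p assume "p \<in> {(x, z) | z. z \<in> sphere (0::complex) 1 \<and> z ^ nmin \<sigma> x = c}"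
      then obtain z where pz: "p = (x,z)" and z: "z \<in> sphere 0 1" and zc: "z ^ nmin \<sigma> x = c" by auto
      have "psi \<sigma> (x,z) = omega2 \<sigma> x c"
      proof (rule extensionalityI[OF char_ext[OF psi_char[OF z]]])
        show "omega2 \<sigma> x c \<in> extensional (Comm \<sigma>)" by (simp add: omega2_def)
        fix F assume F: "F \<in> Comm \<sigma>"
        show "psi \<sigma> (x,z) F = omega2 \<sigma> x c F" using psi_omega2[OF xP F z] zc by simp
      qed
      then show "p \<in> {p \<in> topspace XT. psi \<sigma> p = omega2 \<sigma> x c}" using z pz by (simp add: topspace_XT)
    qed
  qed
qed

end

theorem theorem3p10:
  fixes \<sigma> :: "'a::t2_space \<Rightarrow> 'a"
  assumes "compact (UNIV :: 'a set)"
    and "bij \<sigma>" and "continuous_on UNIV \<sigma>" and "continuous_on UNIV (inv \<sigma>)"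
  shows "continuous_map XT (gelfand_top \<sigma>) (psi \<sigma>)
    \<and> psi \<sigma> ` topspace XT = characters \<sigma>
    \<and> quotient_map XT (gelfand_top \<sigma>) (psi \<sigma>)
    \<and> (\<forall>x. x \<notin> Per \<sigma> \<longrightarrow>
           {p \<in> topspace XT. psi \<sigma> p = omega1 \<sigma> x} = {x} \<times> sphere 0 1)
    \<and> (\<forall>x c. x \<in> Per \<sigma> \<and> c \<in> sphere 0 1 \<longrightarrow>
           {p \<in> topspace XT. psi \<sigma> p = omega2 \<sigma> x c} =
           {(x, z) | z. z \<in> sphere 0 1 \<and> z ^ nmin \<sigma> x = c})"
proof -
  interpret Setup \<sigma> by (rule Setup.intro) (use assms in auto)
  show ?thesis using psi_cont_map psi_image psi_quotient fiber1 fiber2 by blast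
qed


end
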